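(* Let $G\subseteq\mathrm{Cl}_n$ and $p$ a probability distribution on $G$ such that $S=\sum_{g\in G}p(g)\omega(g)^\dagger M\omega(g)$ is invertible, and for each $g\in G$ let $\Lambda(g)$ be a quantum channel. Then $S=\frac1d\sum_{a\in\mathbb{F}_2^{2n}}s_a|\sigma_a)(\sigma_a|$ with $s_a\in(0,1]$ (so the $s_a$ are the eigenvalues of $S$), each $\bar\Lambda_a$ is a quantum channel, and the noisy frame operator satisfies $$\tilde S:=\sum_{g\in G}p(g)\omega(g)^\dagger M\omega(g)\Lambda(g)=\frac1d\sum_{a\in\mathbb{F}_2^{2n}}s_a|\sigma_a)(\sigma_a|\bar\Lambda_a.$$ Furthermore, if every $\Lambda(g)$ is a Pauli channel, then $\bar\Lambda_a|\sigma_a)=\bar\lambda_a|\sigma_a)$ with $\bar\lambda_a\in[-1,1]$.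
   Context: $d=2^n$; $(A|B)=\mathrm{Tr}(A^\dagger B)$; $|A)(B|$ is the superoperator $C\mapsto(B|C)A$; $\omega(g)(A)=gAg^\dagger$, $\omega(g)^\dagger(A)=g^\dagger Ag$; $E_x=|x\rangle\langle x|$, $M=\sum_{x\in\mathbb{F}_2^n}|E_x)(E_x|$. Pauli operators $\sigma_a$, $a\in\mathbb{F}_2^{2n}$, with per-qubit convention $\sigma_{00}=\mathbb 1,\sigma_{01}=X,\sigma_{11}=Y,\sigma_{10}=Z$. $Z_z=\bigotimes_iZ^{z_i}$ for $z\in\mathbb{F}_2^n$; for $g\in\mathrm{Cl}_n$, $\Xi_z(g)$ is the Pauli operator $\sigma_b$ with $g^\dagger Z_zg=\pm\sigma_b$. $s_a=\sum_{z\in\mathbb{F}_2^n}\sum_{g\in G:\Xi_z(g)=\sigma_a}p(g)$, $\bar\Lambda_a=s_a^{-1}\sum_z\sum_{g\in G:\Xi_z(g)=\sigma_a}p(g)\Lambda(g)$. A Pauli channel is $\Lambda(\rho)=\sum_bq_b\sigma_b\rho\sigma_b$ with $q$ a probability vector; then $\Lambda(\sigma_a)=\lambda_a\sigma_a$. If $\Lambda(g)$ has eigenvalues $\lambda_a(g)$, $\bar\lambda_a=s_a^{-1}\sum_z\sum_{g\in G:\Xi_z(g)=\sigma_a}p(g)\lambda_a(g)$. *)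

theory Defs
  imports "Jordan_Normal_Form.Matrix" Complex_Main
begin

type_synonym cmat = "complex mat"
type_synonym superop = "cmat \<Rightarrow> cmat"

definition dim :: "nat \<Rightarrow> nat" where "dim n = 2 ^ n"

definition dag :: "cmat \<Rightarrow> cmat" where
  "dag A = mat (dim_col A) (dim_row A) (\<lambda>(i,j). cnj (A $$ (j,i)))"

definition tr :: "cmat \<Rightarrow> complex" where
  "tr A = (\<Sum>i<dim_row A. A $$ (i,i))"

definition hs :: "cmat \<Rightarrow> cmat \<Rightarrow> complex" where
  "hs A B = tr (dag A * B)"

definition msum :: "nat \<Rightarrow> ('a \<Rightarrow> cmat) \<Rightarrow> 'a set \<Rightarrow> cmat" where
  "msum d f X = mat d d (\<lambda>(i,j). \<Sum>x\<in>X. f x $$ (i,j))"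

definition ketbra :: "cmat \<Rightarrow> cmat \<Rightarrow> superop" where
  "ketbra A B = (\<lambda>C. hs B C \<cdot>\<^sub>m A)"

definition omega :: "cmat \<Rightarrow> superop" where
  "omega g = (\<lambda>A. g * A * dag g)"
definition omega_dag :: "cmat \<Rightarrow> superop" where
  "omega_dag g = (\<lambda>A. dag g * A * g)"

text \<open>Single-qubit Paulis with convention sigma_00 = 1, sigma_01 = X, sigma_11 = Y, sigma_10 = Z.\<close>
definition pauli1 :: "bool \<times> bool \<Rightarrow> cmat" where
  "pauli1 ab = (case ab of
      (False, False) \<Rightarrow> mat 2 2 (\<lambda>(i,j). if i = j then 1 else 0)
    | (False, True)  \<Rightarrow> mat 2 2 (\<lambda>(i,j). if i \<noteq> j then 1 else 0)
    | (True, True)   \<Rightarrow> mat 2 2 (\<lambda>(i,j). if i = 0 \<and> j = 1 then - \<i> else if i = 1 \<and> j = 0 then \<i> else 0)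
    | (True, False)  \<Rightarrow> mat 2 2 (\<lambda>(i,j). if i = j then (if i = 0 then 1 else -1) else 0))"

text \<open>a in F_2^{2n} is a list of n bit pairs (one per qubit); computational basis index i
  has bit k (i div 2^k mod 2) as state of qubit k. sigma_a is the tensor product.\<close>
definition pauli :: "(bool \<times> bool) list \<Rightarrow> cmat" where
  "pauli a = mat (2 ^ length a) (2 ^ length a)
     (\<lambda>(i,j). \<Prod>k<length a. pauli1 (a ! k) $$ (i div 2 ^ k mod 2, j div 2 ^ k mod 2))"

definition pauli_idx :: "nat \<Rightarrow> (bool \<times> bool) list set" where
  "pauli_idx n = {a. length a = n}"

definition bitvecs :: "nat \<Rightarrow> bool list set" where
  "bitvecs n = {z. length z = n}"

definition Zz :: "bool list \<Rightarrow> cmat" where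
  "Zz z = pauli (map (\<lambda>b. (b, False)) z)"

definition Ex :: "nat \<Rightarrow> nat \<Rightarrow> cmat" where
  "Ex n x = mat (dim n) (dim n) (\<lambda>(i,j). if i = x \<and> j = x then 1 else 0)"

definition Mop :: "nat \<Rightarrow> superop" where
  "Mop n = (\<lambda>C. msum (dim n) (\<lambda>x. ketbra (Ex n x) (Ex n x) C) {..<dim n})"

definition unitary_mat :: "nat \<Rightarrow> cmat \<Rightarrow> bool" where
  "unitary_mat d U \<longleftrightarrow> U \<in> carrier_mat d d \<and> dag U * U = 1\<^sub>m d \<and> U * dag U = 1\<^sub>m d"

definition Clifford :: "nat \<Rightarrow> cmat set" where
  "Clifford n = {U. unitary_mat (dim n) U \<and>
     (\<forall>a\<in>pauli_idx n. \<exists>b\<in>pauli_idx n. \<exists>s\<in>{1, -1}. U * pauli a * dag U = s \<cdot>\<^sub>m pauli b)}"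

definition Xi :: "nat \<Rightarrow> bool list \<Rightarrow> cmat \<Rightarrow> cmat" where
  "Xi n z g = pauli (THE b. b \<in> pauli_idx n \<and>
       (dag g * Zz z * g = pauli b \<or> dag g * Zz z * g = - pauli b))"

definition quantum_channel :: "nat \<Rightarrow> superop \<Rightarrow> bool" where
  "quantum_channel d L \<longleftrightarrow> (\<exists>Ks :: cmat list. set Ks \<subseteq> carrier_mat d d \<and>
      msum d (\<lambda>k. dag (Ks ! k) * (Ks ! k)) {..<length Ks} = 1\<^sub>m d \<and>
      (\<forall>\<rho>\<in>carrier_mat d d. L \<rho> = msum d (\<lambda>k. (Ks ! k) * \<rho> * dag (Ks ! k)) {..<length Ks}))"

definition pauli_channel :: "nat \<Rightarrow> superop \<Rightarrow> bool" where
  "pauli_channel n L \<longleftrightarrow> (\<exists>q :: (bool \<times> bool) list \<Rightarrow> real.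
      (\<forall>b\<in>pauli_idx n. q b \<ge> 0) \<and> (\<Sum>b\<in>pauli_idx n. q b) = 1 \<and>
      (\<forall>\<rho>\<in>carrier_mat (dim n) (dim n).
          L \<rho> = msum (dim n) (\<lambda>b. complex_of_real (q b) \<cdot>\<^sub>m (pauli b * \<rho> * pauli b)) (pauli_idx n)))"

definition pauli_eig :: "superop \<Rightarrow> (bool \<times> bool) list \<Rightarrow> complex" where
  "pauli_eig L a = (THE c. L (pauli a) = c \<cdot>\<^sub>m pauli a)"

definition s_coef :: "nat \<Rightarrow> cmat set \<Rightarrow> (cmat \<Rightarrow> real) \<Rightarrow> (bool \<times> bool) list \<Rightarrow> real" where
  "s_coef n G p a = (\<Sum>z\<in>bitvecs n. \<Sum>g\<in>{g\<in>G. Xi n z g = pauli a}. p g)"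

definition Lbar :: "nat \<Rightarrow> cmat set \<Rightarrow> (cmat \<Rightarrow> real) \<Rightarrow> (cmat \<Rightarrow> superop)
    \<Rightarrow> (bool \<times> bool) list \<Rightarrow> superop" where
  "Lbar n G p L a = (\<lambda>C. complex_of_real (inverse (s_coef n G p a)) \<cdot>\<^sub>m
      msum (dim n) (\<lambda>z. msum (dim n) (\<lambda>g. complex_of_real (p g) \<cdot>\<^sub>m L g C)
                                    {g\<in>G. Xi n z g = pauli a}) (bitvecs n))"

definition lbar :: "nat \<Rightarrow> cmat set \<Rightarrow> (cmat \<Rightarrow> real) \<Rightarrow> (cmat \<Rightarrow> superop)
    \<Rightarrow> (bool \<times> bool) list \<Rightarrow> complex" where
  "lbar n G p L a = complex_of_real (inverse (s_coef n G p a)) *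
      (\<Sum>z\<in>bitvecs n. \<Sum>g\<in>{g\<in>G. Xi n z g = pauli a}. complex_of_real (p g) * pauli_eig (L g) a)"

definition frame_op :: "nat \<Rightarrow> cmat set \<Rightarrow> (cmat \<Rightarrow> real) \<Rightarrow> superop" where
  "frame_op n G p = (\<lambda>C. msum (dim n)
      (\<lambda>g. complex_of_real (p g) \<cdot>\<^sub>m omega_dag g (Mop n (omega g C))) G)"

definition noisy_frame_op :: "nat \<Rightarrow> cmat set \<Rightarrow> (cmat \<Rightarrow> real) \<Rightarrow> (cmat \<Rightarrow> superop) \<Rightarrow> superop" where
  "noisy_frame_op n G p L = (\<lambda>C. msum (dim n)
      (\<lambda>g. complex_of_real (p g) \<cdot>\<^sub>m omega_dag g (Mop n (omega g (L g C)))) G)"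

end

theory Submission
  imports Defs
begin


lemma mult_entry:
  assumes "A \<in> carrier_mat d k" "B \<in> carrier_mat k e" "i < d" "j < e"
  shows "(A * B) $$ (i,j) = (\<Sum>l<k. A $$ (i,l) * B $$ (l,j))"
  using assms by (auto simp: scalar_prod_def lessThan_atLeast0 intro!: sum.cong)

declare index_mult_mat(1)[simp del]

lemma msum_carrier[simp]: "msum d f X \<in> carrier_mat d d"
  by (simp add: msum_def)
lemma msum_dim[simp]: "dim_row (msum d f X) = d" "dim_col (msum d f X) = d"
  by (simp_all add: msum_def)
lemma msum_index[simp]: "i < d \<Longrightarrow> j < d \<Longrightarrow> msum d f X $$ (i,j) = (\<Sum>x\<in>X. f x $$ (i,j))"
  by (simp add: msum_def)

lemma dag_dim[simp]: "dim_row (dag A) = dim_col A" "dim_col (dag A) = dim_row A"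
  unfolding dag_def by simp_all
lemma dag_carrier[simp]: "A \<in> carrier_mat r c \<Longrightarrow> dag A \<in> carrier_mat c r"
  unfolding carrier_mat_def by simp
lemma dag_index[simp]: "i < dim_col A \<Longrightarrow> j < dim_row A \<Longrightarrow> dag A $$ (i,j) = cnj (A $$ (j,i))"
  by (simp add: dag_def)

lemma dag_mult:
  assumes "A \<in> carrier_mat r k" "B \<in> carrier_mat k c"
  shows "dag (A * B) = dag B * dag A"
proof (rule eq_matI)
  fix i j assume ij: "i < dim_row (dag B * dag A)" "j < dim_col (dag B * dag A)"
  then have "i < c" "j < r" using assms by auto
  then show "dag (A * B) $$ (i, j) = (dag B * dag A) $$ (i, j)"
    using assms by (simp add: mult_entry[of _ c k _ r] mult_entry[of _ r k _ c] mult.commute)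
qed (use assms in auto)

lemma dag_smult: "dag (c \<cdot>\<^sub>m A) = cnj c \<cdot>\<^sub>m dag A"
  by (rule eq_matI) auto

lemma dag_dag[simp]: "dag (dag A) = A"
  by (rule eq_matI) auto

lemma tr_mult_comm:
  assumes "A \<in> carrier_mat d k" "B \<in> carrier_mat k d"
  shows "tr (A * B) = tr (B * A)"
proof -
  have "tr (A * B) = (\<Sum>i<d. \<Sum>l<k. A $$ (i,l) * B $$ (l,i))"
    using assms by (simp add: tr_def mult_entry)
  also have "\<dots> = (\<Sum>l<k. \<Sum>i<d. B $$ (l,i) * A $$ (i,l))"
    by (subst sum.swap) (simp add: mult.commute)
  also have "\<dots> = tr (B * A)"
    using assms by (simp add: tr_def mult_entry)
  finally show ?thesis .
qed

lemma hs_entry: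
  assumes "A \<in> carrier_mat d e" "B \<in> carrier_mat d e"
  shows "hs A B = (\<Sum>i<e. \<Sum>l<d. cnj (A $$ (l,i)) * B $$ (l,i))"
  using assms by (simp add: hs_def tr_def mult_entry[of _ e d _ e])

lemma hs_smult:
  assumes "A \<in> carrier_mat d e" "B \<in> carrier_mat d e"
  shows "hs A (c \<cdot>\<^sub>m B) = c * hs A B"
  using assms by (simp add: hs_entry sum_distrib_left algebra_simps)

lemma hs_msum:
  assumes "A \<in> carrier_mat d d" "finite X" "\<And>x. x \<in> X \<Longrightarrow> f x \<in> carrier_mat d d"
  shows "hs A (msum d f X) = (\<Sum>x\<in>X. hs A (f x))"
proof -
  have "hs A (msum d f X) = (\<Sum>i<d. \<Sum>l<d. cnj (A $$ (l,i)) * (\<Sum>x\<in>X. f x $$ (l,i)))"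
    using assms by (simp add: hs_entry[of _ d d])
  also have "\<dots> = (\<Sum>x\<in>X. \<Sum>i<d. \<Sum>l<d. cnj (A $$ (l,i)) * f x $$ (l,i))"
    apply (simp add: sum_distrib_left)
    apply (subst sum.swap)
    apply (rule sum.swap)
    done
  also have "\<dots> = (\<Sum>x\<in>X. hs A (f x))"
    using assms by (intro sum.cong) (simp_all add: hs_entry[of _ d d])
  finally show ?thesis .
qed



definition bt :: "nat \<Rightarrow> nat \<Rightarrow> nat" where "bt k q = k div 2 ^ q mod 2"

lemma bt_less[simp]: "bt k q < 2" by (simp add: bt_def)
lemma bt_0: "bt k 0 = k mod 2" by (simp add: bt_def)
lemma bt_Suc: "bt k (Suc q) = bt (k div 2) q" by (simp add: bt_def div_mult2_eq)

lemma sum_pairs: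
  fixes \<phi> :: "nat \<Rightarrow> 'a::comm_monoid_add"
  shows "(\<Sum>k<2*N. \<phi> k) = (\<Sum>m<N. \<phi> (2*m) + \<phi> (2*m+1))"
  by (induction N) (simp_all add: add.assoc)

lemma Suc_mult2_mod[simp]: "Suc (m*2) mod 2 = 1" "Suc (m * 2) div 2 = m" "Suc (2*m) mod 2 = 1" "Suc (2*m) div 2 = m"
  by presburger+

lemma bitsum:
  fixes H :: "nat \<Rightarrow> nat \<Rightarrow> 'a::comm_semiring_1"
  shows "(\<Sum>k<2^n. \<Prod>q<n. H q (bt k q)) = (\<Prod>q<n. H q 0 + H q 1)"
proof (induction n arbitrary: H)
  case 0 then show ?case by simp
next
  case (Suc n)
  have "(\<Sum>k<2^Suc n. \<Prod>q<Suc n. H q (bt k q))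
      = (\<Sum>k<2*2^n. H 0 (k mod 2) * (\<Prod>q<n. H (Suc q) (bt (k div 2) q)))"
    by (simp only: power_Suc prod.lessThan_Suc_shift bt_0 bt_Suc)
  also have "\<dots> = (\<Sum>m<2^n. (H 0 0 + H 0 1) * (\<Prod>q<n. H (Suc q) (bt m q)))"
    by (simp add: sum_pairs algebra_simps)
  also have "\<dots> = (H 0 0 + H 0 1) * (\<Prod>q<n. H (Suc q) 0 + H (Suc q) 1)"
    using Suc.IH[of "\<lambda>q. H (Suc q)"] by (simp add: sum_distrib_left[symmetric])
  also have "\<dots> = (\<Prod>q<Suc n. H q 0 + H q 1)"
    by (simp only: prod.lessThan_Suc_shift)
  finally show ?case .
qed

lemma bits_eq:
  assumes "i < 2^n" "j < 2^n" "\<forall>q<n. bt i q = bt j q"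
  shows "i = j"
  using assms
proof (induction n arbitrary: i j)
  case 0 then show ?case by simp
next
  case (Suc n)
  have "i div 2 = j div 2"
    using Suc.prems by (intro Suc.IH) (auto simp: bt_Suc[symmetric])
  moreover have "i mod 2 = j mod 2" using Suc.prems(3) by (auto simp: bt_0[symmetric])
  ultimately show ?case by (metis div_mult_mod_eq)
qed

definition tensor :: "nat \<Rightarrow> (nat \<Rightarrow> cmat) \<Rightarrow> cmat" where
  "tensor n F = mat (2^n) (2^n) (\<lambda>(i,j). \<Prod>q<n. F q $$ (bt i q, bt j q))"

lemma tensor_carrier[simp]: "tensor n F \<in> carrier_mat (2^n) (2^n)"
  by (simp add: tensor_def)
lemma tensor_dim[simp]: "dim_row (tensor n F) = 2^n" "dim_col (tensor n F) = 2^n"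
  by (simp_all add: tensor_def)
lemma tensor_index: "i < 2^n \<Longrightarrow> j < 2^n \<Longrightarrow> tensor n F $$ (i,j) = (\<Prod>q<n. F q $$ (bt i q, bt j q))"
  by (simp add: tensor_def)

lemma sum2: "(\<Sum>l<(2::nat). f l) = f 0 + (f 1 :: 'a::comm_monoid_add)"
  by (simp add: numeral_2_eq_2)

lemma tensor_mult:
  assumes "\<And>q. q < n \<Longrightarrow> F q \<in> carrier_mat 2 2" "\<And>q. q < n \<Longrightarrow> G q \<in> carrier_mat 2 2"
  shows "tensor n F * tensor n G = tensor n (\<lambda>q. F q * G q)"
proof (rule eq_matI)
  fix i j assume "i < dim_row (tensor n (\<lambda>q. F q * G q))" "j < dim_col (tensor n (\<lambda>q. F q * G q))"
  then have ij: "i < 2^n" "j < 2^n" by auto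
  have "(tensor n F * tensor n G) $$ (i,j)
     = (\<Sum>k<2^n. \<Prod>q<n. F q $$ (bt i q, bt k q) * G q $$ (bt k q, bt j q))"
    using ij by (simp add: mult_entry[of _ "2^n" "2^n" _ "2^n"] tensor_index prod.distrib)
  also have "\<dots> = (\<Prod>q<n. F q $$ (bt i q, 0) * G q $$ (0, bt j q) + F q $$ (bt i q, 1) * G q $$ (1, bt j q))"
    by (rule bitsum)
  also have "\<dots> = (\<Prod>q<n. (F q * G q) $$ (bt i q, bt j q))"
    using assms by (intro prod.cong refl) (simp add: mult_entry[of _ 2 2 _ 2] sum2)
  finally show "(tensor n F * tensor n G) $$ (i,j) = tensor n (\<lambda>q. F q * G q) $$ (i,j)"
    using ij by (simp add: tensor_index)
qed auto

lemma tr_tensor: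
  assumes "\<And>q. q < n \<Longrightarrow> F q \<in> carrier_mat 2 2"
  shows "tr (tensor n F) = (\<Prod>q<n. tr (F q))"
proof -
  have "tr (tensor n F) = (\<Sum>k<2^n. \<Prod>q<n. F q $$ (bt k q, bt k q))"
    by (simp add: tr_def tensor_index)
  also have "\<dots> = (\<Prod>q<n. F q $$ (0,0) + F q $$ (1,1))"
    by (rule bitsum)
  also have "\<dots> = (\<Prod>q<n. tr (F q))"
    apply (intro prod.cong refl)
    subgoal for q using assms[of q] by (simp add: tr_def sum2)
    done
  finally show ?thesis .
qed

lemma dag_tensor:
  assumes "\<And>q. q < n \<Longrightarrow> F q \<in> carrier_mat 2 2"
  shows "dag (tensor n F) = tensor n (\<lambda>q. dag (F q))"
  apply (intro eq_matI)
  apply (simp_all add: tensor_index cnj_prod)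
  apply (intro prod.cong refl)
  subgoal for i j q using assms[of q] by simp
  done

lemma smult_tensor:
  assumes "\<And>q. q < n \<Longrightarrow> F q \<in> carrier_mat 2 2"
  shows "tensor n (\<lambda>q. c q \<cdot>\<^sub>m F q) = (\<Prod>q<n. c q) \<cdot>\<^sub>m tensor n F"
  apply (intro eq_matI)
  apply (simp_all add: tensor_index prod.distrib[symmetric])
  apply (intro prod.cong refl)
  subgoal for i j q using assms[of q] by simp
  done

lemma one_tensor: "tensor n (\<lambda>q. 1\<^sub>m 2) = 1\<^sub>m (2^n)"
proof (rule eq_matI)
  fix i j assume "i < dim_row (1\<^sub>m (2^n) :: cmat)" "j < dim_col (1\<^sub>m (2^n) :: cmat)"
  then have ij: "i < 2^n" "j < 2^n" by auto
  have "(\<Prod>q<n. (1\<^sub>m 2 :: cmat) $$ (bt i q, bt j q)) = (\<Prod>q<n. if bt i q = bt j q then 1 else 0)"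
    by (intro prod.cong refl) simp
  also have "\<dots> = (if i = j then 1 else 0)"
  proof (cases "i = j")
    case True then show ?thesis by simp
  next
    case False
    then obtain q where "q < n" "bt i q \<noteq> bt j q" using bits_eq[OF ij] by blast
    then show ?thesis using False by (auto simp: prod_zero_iff)
  qed
  finally show "tensor n (\<lambda>q. 1\<^sub>m 2) $$ (i, j) = 1\<^sub>m (2 ^ n) $$ (i, j)"
    using ij by (simp add: tensor_index)
qed auto



lemma mat2_eqI:
  assumes "A \<in> carrier_mat 2 2" "B \<in> carrier_mat 2 2"
    "A $$ (0,0) = B $$ (0,0)" "A $$ (0,1) = B $$ (0,1)" "A $$ (1,0) = B $$ (1,0)" "A $$ (1,1) = B $$ (1,1)"
  shows "A = B"
proof (rule eq_matI)
  fix i j assume "i < dim_row B" "j < dim_col B"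
  then have "i = 0 \<or> i = 1" "j = 0 \<or> j = 1" using assms(2) by auto
  then show "A $$ (i, j) = B $$ (i, j)" using assms by auto
qed (use assms in auto)

lemma pauli1_carrier[simp]: "pauli1 ab \<in> carrier_mat 2 2"
  by (simp add: pauli1_def split: prod.split bool.split)

lemma pauli1_dim[simp]: "dim_row (pauli1 ab) = 2" "dim_col (pauli1 ab) = 2"
  using pauli1_carrier[of ab] by (auto simp del: pauli1_carrier)

lemma pauli1_mult_carrier[simp]: "pauli1 a * pauli1 b \<in> carrier_mat 2 2"
  "pauli1 c * pauli1 a * pauli1 b \<in> carrier_mat 2 2"
  by (auto intro!: mult_carrier_mat)

lemma bool_pair_cases: "ab = (False,False) \<or> ab = (False,True) \<or> ab = (True,True) \<or> ab = (True,False)"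
  by (cases ab) auto

lemma pauli1_dag: "dag (pauli1 ab) = pauli1 ab"
  using bool_pair_cases[of ab]
  by (elim disjE) (rule mat2_eqI; simp add: pauli1_def)+

definition eps1 :: "bool \<times> bool \<Rightarrow> bool \<times> bool \<Rightarrow> complex" where
  "eps1 a b = (if a = (False,False) \<or> b = (False,False) \<or> a = b then 1 else -1)"

lemma mult2_entry: "A \<in> carrier_mat 2 2 \<Longrightarrow> B \<in> carrier_mat 2 2 \<Longrightarrow> i < 2 \<Longrightarrow> j < 2 \<Longrightarrow>
  (A * B) $$ (i,j) = A $$ (i,0) * B $$ (0,j) + A $$ (i,1) * B $$ (1,j)"
  by (simp add: mult_entry[of _ 2 2 _ 2] sum2)

lemma pauli1_sq: "pauli1 ab * pauli1 ab = 1\<^sub>m 2"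
  using bool_pair_cases[of ab]
  by (elim disjE) (rule mat2_eqI; simp add: mult2_entry; simp add: pauli1_def)+

lemma pauli1_tr: "tr (pauli1 a * pauli1 b) = (if a = b then 2 else 0)"
  using bool_pair_cases[of a] bool_pair_cases[of b]
  by (elim disjE; simp add: tr_def sum2 mult2_entry; simp add: pauli1_def)

lemma pb_exhaust: "(ab = (False,False) \<Longrightarrow> P) \<Longrightarrow> (ab = (False,True) \<Longrightarrow> P) \<Longrightarrow> (ab = (True,True) \<Longrightarrow> P) \<Longrightarrow> (ab = (True,False) \<Longrightarrow> P) \<Longrightarrow> P"
  using bool_pair_cases[of ab] by blast

lemma pauli1_conj: "pauli1 b * pauli1 a * pauli1 b = eps1 a b \<cdot>\<^sub>m pauli1 a"
  by (cases a rule: pb_exhaust; cases b rule: pb_exhaust; simp only:; rule mat2_eqI; simp add: mult2_entry; simp add: pauli1_def eps1_def)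

lemma eps1_pm: "eps1 a b = 1 \<or> eps1 a b = -1"
  by (simp add: eps1_def)

lemma pauli_tensor: "pauli a = tensor (length a) (\<lambda>q. pauli1 (a ! q))"
  by (simp add: pauli_def tensor_def bt_def)

lemma pauli_carrier[simp]: "pauli a \<in> carrier_mat (2 ^ length a) (2 ^ length a)"
  by (simp add: pauli_tensor)
lemma pauli_dim[simp]: "dim_row (pauli a) = 2 ^ length a" "dim_col (pauli a) = 2 ^ length a"
  by (simp_all add: pauli_tensor)

lemma pauli_dag[simp]: "dag (pauli a) = pauli a"
  by (simp add: pauli_tensor dag_tensor pauli1_dag)

lemma pauli_sq: "pauli a * pauli a = 1\<^sub>m (2 ^ length a)"
  by (simp add: pauli_tensor tensor_mult pauli1_sq one_tensor)

lemma tr_pauli_mult: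
  assumes "length a = length b"
  shows "tr (pauli a * pauli b) = (if a = b then 2 ^ length a else 0)"
proof -
  have "tr (pauli a * pauli b) = (\<Prod>q<length a. if a ! q = b ! q then 2 else 0)"
    using assms by (simp add: pauli_tensor tensor_mult tr_tensor pauli1_tr)
  also have "\<dots> = (if a = b then 2 ^ length a else 0)"
  proof (cases "a = b")
    case True then show ?thesis by simp
  next
    case False
    then obtain q where "q < length a" "a ! q \<noteq> b ! q" using assms nth_equalityI by blast
    then show ?thesis using False by (auto simp: prod_zero_iff)
  qed
  finally show ?thesis .
qed

lemma pauli_conj:
  assumes "length a = length b"
  shows "pauli b * pauli a * pauli b = (\<Prod>q<length a. eps1 (a ! q) (b ! q)) \<cdot>\<^sub>m pauli a"
  using assms by (simp add: pauli_tensor tensor_mult pauli1_conj smult_tensor)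

lemma hs_pauli:
  assumes "length a = length b"
  shows "hs (pauli a) (pauli b) = (if a = b then 2 ^ length a else 0)"
  using assms by (simp add: hs_def tr_pauli_mult)




lemma tr_smult: "A \<in> carrier_mat d d \<Longrightarrow> tr (c \<cdot>\<^sub>m A) = c * tr A"
  by (simp add: tr_def sum_distrib_left)

lemma pauli_idx_finite[simp]: "finite (pauli_idx n)"
  unfolding pauli_idx_def using finite_lists_length_eq[of "UNIV :: (bool \<times> bool) set" n] by simp

lemma bitvecs_finite[simp]: "finite (bitvecs n)"
  unfolding bitvecs_def using finite_lists_length_eq[of "UNIV :: bool set" n] by simp

lemma tr_mult_smult: "A \<in> carrier_mat d d \<Longrightarrow> B \<in> carrier_mat d d \<Longrightarrow> tr (A * (c \<cdot>\<^sub>m B)) = c * tr (A * B)"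
  by (simp add: mult_smult_distrib tr_smult[of _ d])

lemma signed_pauli_unique:
  assumes "length a = length b" "s \<in> {1,-1}" "s' \<in> {1,-1}"
    and eq: "s \<cdot>\<^sub>m pauli a = s' \<cdot>\<^sub>m pauli b"
  shows "a = b"
proof (rule ccontr)
  assume ne: "a \<noteq> b"
  have "tr (pauli a * (s \<cdot>\<^sub>m pauli a)) = tr (pauli a * (s' \<cdot>\<^sub>m pauli b))" using eq by simp
  moreover have "tr (pauli a * (s \<cdot>\<^sub>m pauli a)) = s * 2 ^ length a"
    by (simp add: tr_mult_smult[of _ "2^length a"] tr_pauli_mult)
  moreover have "tr (pauli a * (s' \<cdot>\<^sub>m pauli b)) = 0"
    using assms(1) ne pauli_carrier[of b] pauli_carrier[of a]
      tr_mult_smult[of "pauli a" "2^length a" "pauli b" s'] tr_pauli_mult[OF assms(1)]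
    by simp
  ultimately have "s * 2 ^ length a = 0" by simp
  then show False using assms(2) by auto
qed

lemma pauli_inj:
  assumes "length a = length b" "pauli a = pauli b" shows "a = b"
  using signed_pauli_unique[of a b 1 1] assms by simp

lemma bitvecs_Suc: "bitvecs (Suc n) = (\<lambda>(b,z). b # z) ` (UNIV \<times> bitvecs n)"
  unfolding bitvecs_def by (auto simp: length_Suc_conv image_iff)

lemma bitvec_sum:
  fixes H :: "nat \<Rightarrow> bool \<Rightarrow> 'a::comm_semiring_1"
  shows "(\<Sum>z\<in>bitvecs n. \<Prod>q<n. H q (z ! q)) = (\<Prod>q<n. H q False + H q True)"
proof (induction n arbitrary: H)
  case 0
  have "bitvecs 0 = {[]}" by (auto simp: bitvecs_def)
  then show ?case by simp
next
  case (Suc n)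
  have inj: "inj_on (\<lambda>(b,z). b # z) (UNIV \<times> bitvecs n)" by (auto simp: inj_on_def)
  have "(\<Sum>z\<in>bitvecs (Suc n). \<Prod>q<Suc n. H q (z ! q))
      = (\<Sum>(b,z)\<in>UNIV \<times> bitvecs n. H 0 b * (\<Prod>q<n. H (Suc q) (z ! q)))"
    unfolding bitvecs_Suc sum.reindex[OF inj]
    by (simp del: prod.lessThan_Suc add: prod.lessThan_Suc_shift case_prod_unfold)
  also have "\<dots> = (\<Sum>b\<in>UNIV. H 0 b) * (\<Sum>z\<in>bitvecs n. \<Prod>q<n. H (Suc q) (z ! q))"
    by (simp add: sum.cartesian_product[symmetric] sum_product)
  also have "\<dots> = (H 0 False + H 0 True) * (\<Prod>q<n. H (Suc q) False + H (Suc q) True)"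
    using Suc.IH[of "\<lambda>q. H (Suc q)"] by (simp add: UNIV_bool)
  also have "\<dots> = (\<Prod>q<Suc n. H q False + H q True)"
    by (simp only: prod.lessThan_Suc_shift)
  finally show ?case .
qed

definition zc :: "bool list \<Rightarrow> nat \<Rightarrow> complex" where
  "zc z i = (\<Prod>q<length z. if z ! q \<and> bt i q = 1 then -1 else 1)"

lemma Zz_carrier[simp]: "Zz z \<in> carrier_mat (2 ^ length z) (2 ^ length z)"
  using pauli_carrier[of "map (\<lambda>b. (b, False)) z"] by (simp add: Zz_def)

lemma Zz_index:
  assumes "i < 2 ^ length z" "j < 2 ^ length z"
  shows "Zz z $$ (i,j) = (if i = j then zc z i else 0)"
proof -
  have "Zz z $$ (i,j) = (\<Prod>q<length z. if bt i q = bt j q then (if z ! q \<and> bt i q = 1 then -1 else 1) else 0)"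
    using assms unfolding Zz_def pauli_tensor
    apply (simp add: tensor_index)
    apply (intro prod.cong refl)
    subgoal for q
      using bt_less[of i q] bt_less[of j q]
      by (cases "z ! q") (auto simp: pauli1_def less_2_cases_iff)
    done
  also have "\<dots> = (if i = j then zc z i else 0)"
  proof (cases "i = j")
    case True then show ?thesis by (simp add: zc_def)
  next
    case False
    then obtain q where q: "q < length z" "bt i q \<noteq> bt j q" using bits_eq[OF assms] by blast
    show ?thesis
      apply (simp only: if_not_P[OF False])
      apply (rule prod_zero)
      using q by (auto intro!: bexI[of _ q])
  qed
  finally show ?thesis .
qed

lemma zc_orth:
  assumes "k < 2 ^ n" "i < 2 ^ n"
  shows "(\<Sum>z\<in>bitvecs n. zc z k * zc z i) = (if k = i then 2 ^ n else 0)"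
proof -
  have "(\<Sum>z\<in>bitvecs n. zc z k * zc z i)
      = (\<Sum>z\<in>bitvecs n. \<Prod>q<n. (if z ! q \<and> bt k q = 1 then -1 else 1) * (if z ! q \<and> bt i q = 1 then -1 else (1::complex)))"
    by (intro sum.cong refl) (simp add: zc_def bitvecs_def prod.distrib)
  also have "\<dots> = (\<Prod>q<n. if bt k q = bt i q then 2 else 0)"
    apply (subst bitvec_sum)
    apply (intro prod.cong refl)
    subgoal for q using bt_less[of k q] bt_less[of i q] by (auto simp: less_2_cases_iff)
    done
  also have "\<dots> = (if k = i then 2 ^ n else 0)"
  proof (cases "k = i")
    case True then show ?thesis by simp
  next
    case False
    then obtain q where "q < n" "bt k q \<noteq> bt i q" using bits_eq[OF assms] by blast
    then show ?thesis using False by (auto simp: prod_zero_iff)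
  qed
  finally show ?thesis .
qed



lemma cnj_if0[simp]: "cnj (if P then a else 0) = (if P then cnj a else 0)"
  by simp

lemma if0_mult[simp]: "(if P then a else 0) * b = (if P then a * b else (0::'a::mult_zero))"
  by simp
lemma mult_if0[simp]: "b * (if P then a else 0) = (if P then b * a else (0::'a::mult_zero))"
  by simp

lemma sum_single:
  assumes "finite S" "x \<in> S" "\<And>y. y \<in> S \<Longrightarrow> y \<noteq> x \<Longrightarrow> f y = 0"
  shows "sum f S = f x"
proof -
  have "sum f S = f x + sum f (S - {x})" using assms by (simp add: sum.remove)
  also have "sum f (S - {x}) = 0" using assms by (intro sum.neutral) auto
  finally show ?thesis by simp
qed

lemma Ex_dim[simp]: "dim_row (Ex n x) = 2^n" "dim_col (Ex n x) = 2^n"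
  by (simp_all add: Ex_def dim_def)

lemma Ex_carrier[simp]: "Ex n x \<in> carrier_mat (2^n) (2^n)"
  by (simp add: Ex_def dim_def)

lemma Ex_hs:
  assumes "x < 2^n" "X \<in> carrier_mat (2^n) (2^n)"
  shows "hs (Ex n x) X = X $$ (x,x)"
proof -
  have "hs (Ex n x) X = (\<Sum>i<2^n. \<Sum>l<2^n. if i = x then (if l = x then X $$ (l,i) else 0) else 0)"
    using assms by (auto simp: hs_entry[of _ "2^n" "2^n"] Ex_def dim_def intro!: sum.cong)
  also have "\<dots> = (\<Sum>l<2^n. if l = x then X $$ (l,x) else 0)"
    using assms by (subst sum_single[of _ x]) auto
  also have "\<dots> = X $$ (x,x)"
    using assms by (subst sum_single[of _ x]) auto
  finally show ?thesis .
qed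

lemma Ex_index: "i < 2^n \<Longrightarrow> j < 2^n \<Longrightarrow> Ex n x $$ (i,j) = (if i = x \<and> j = x then 1 else 0)"
  by (simp add: Ex_def dim_def)

lemma Mop_entry:
  assumes "X \<in> carrier_mat (2^n) (2^n)" "i < 2^n" "j < 2^n"
  shows "Mop n X $$ (i,j) = (if i = j then X $$ (i,i) else 0)"
proof -
  have "Mop n X $$ (i,j) = (\<Sum>x<2^n. if x = i then (if i = j then X $$ (i,i) else 0) else 0)"
    using assms by (auto simp: Mop_def ketbra_def dim_def Ex_hs Ex_index intro!: sum.cong sum.neutral)
  also have "\<dots> = (if i = j then X $$ (i,i) else 0)" using assms by (subst sum_single[of _ i]) auto
  finally show ?thesis .
qed

lemma cnj_zc[simp]: "cnj (zc z k) = zc z k"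
  by (simp add: zc_def cnj_prod if_distrib cong: if_cong)

lemma Zz_dim[simp]: "dim_row (Zz z) = 2 ^ length z" "dim_col (Zz z) = 2 ^ length z"
  using Zz_carrier[of z] by (auto simp del: Zz_carrier)

lemma hs_Zz:
  assumes "length z = n" "X \<in> carrier_mat (2^n) (2^n)"
  shows "hs (Zz z) X = (\<Sum>k<2^n. zc z k * X $$ (k,k))"
proof -
  have "hs (Zz z) X = (\<Sum>i<2^n. \<Sum>l<2^n. if l = i then zc z i * X $$ (i,i) else 0)"
    using assms Zz_carrier[of z]
    by (auto simp: hs_entry[of _ "2^n" "2^n"] Zz_index intro!: sum.cong)
  also have "\<dots> = (\<Sum>k<2^n. zc z k * X $$ (k,k))" by (simp add: sum.delta sum.delta')
  finally show ?thesis .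
qed

lemma Mop_Zz:
  assumes "X \<in> carrier_mat (2^n) (2^n)"
  shows "Mop n X = msum (2^n) (\<lambda>z. (hs (Zz z) X / 2^n) \<cdot>\<^sub>m Zz z) (bitvecs n)"
proof (rule eq_matI)
  fix i j assume "i < dim_row (msum (2^n) (\<lambda>z. (hs (Zz z) X / 2^n) \<cdot>\<^sub>m Zz z) (bitvecs n))"
     "j < dim_col (msum (2^n) (\<lambda>z. (hs (Zz z) X / 2^n) \<cdot>\<^sub>m Zz z) (bitvecs n))"
  then have ij: "i < 2^n" "j < 2^n" by auto
  have "msum (2^n) (\<lambda>z. (hs (Zz z) X / 2^n) \<cdot>\<^sub>m Zz z) (bitvecs n) $$ (i,j)
      = (\<Sum>z\<in>bitvecs n. (hs (Zz z) X / 2^n) * (if i = j then zc z i else 0))"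
    apply (simp only: msum_index[OF ij])
    apply (intro sum.cong refl)
    using ij by (auto simp: bitvecs_def Zz_index)
  also have "\<dots> = (if i = j then (\<Sum>z\<in>bitvecs n. \<Sum>k<2^n. X $$ (k,k) * (zc z k * zc z i)) / 2^n else 0)"
    using assms by (auto simp: hs_Zz bitvecs_def sum_divide_distrib sum_distrib_right sum_distrib_left mult_ac intro!: sum.cong)
  also have "\<dots> = (if i = j then (\<Sum>k<2^n. X $$ (k,k) * (\<Sum>z\<in>bitvecs n. zc z k * zc z i)) / 2^n else 0)"
    by (simp add: sum_distrib_left sum.swap[of _ "bitvecs n"])
  also have "\<dots> = (if i = j then (\<Sum>k<2^n. if k = i then X $$ (k,k) * 2^n else 0) / 2^n else 0)"
    using ij by (simp add: zc_orth cong: if_cong)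
  also have "\<dots> = Mop n X $$ (i,j)"
    using ij assms by (simp add: Mop_entry sum.delta sum.delta')
  finally show "Mop n X $$ (i,j) = msum (2^n) (\<lambda>z. (hs (Zz z) X / 2^n) \<cdot>\<^sub>m Zz z) (bitvecs n) $$ (i,j)" by simp
qed (auto simp: Mop_def dim_def)



lemma smult_smult_mat: "a \<cdot>\<^sub>m (b \<cdot>\<^sub>m A) = (a * b) \<cdot>\<^sub>m (A :: cmat)"
  by (rule eq_matI) auto
lemma one_smult_mat': "1 \<cdot>\<^sub>m A = (A :: cmat)"
  by (rule eq_matI) auto
lemma neg_one_smult_mat: "(-1) \<cdot>\<^sub>m A = - (A :: cmat)"
  by (rule eq_matI) auto

lemma msum_cong: "(\<And>x. x \<in> X \<Longrightarrow> f x = g x) \<Longrightarrow> msum d f X = msum d g X"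
  by (simp add: msum_def)

lemma msum_mult_left:
  assumes "A \<in> carrier_mat d d" "\<And>x. x \<in> X \<Longrightarrow> f x \<in> carrier_mat d d"
  shows "A * msum d f X = msum d (\<lambda>x. A * f x) X"
proof (rule eq_matI)
  fix i j assume "i < dim_row (msum d (\<lambda>x. A * f x) X)" "j < dim_col (msum d (\<lambda>x. A * f x) X)"
  then have ij: "i < d" "j < d" by auto
  have "(A * msum d f X) $$ (i,j) = (\<Sum>l<d. A $$ (i,l) * (\<Sum>x\<in>X. f x $$ (l,j)))"
    using ij assms by (simp add: mult_entry[of _ d d _ d])
  also have "\<dots> = (\<Sum>x\<in>X. \<Sum>l<d. A $$ (i,l) * f x $$ (l,j))"
    by (simp add: sum_distrib_left) (rule sum.swap)
  also have "\<dots> = msum d (\<lambda>x. A * f x) X $$ (i,j)"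
    using ij assms by (simp add: mult_entry[of _ d d _ d])
  finally show "(A * msum d f X) $$ (i,j) = msum d (\<lambda>x. A * f x) X $$ (i,j)" .
qed (use assms in auto)

lemma msum_mult_right:
  assumes "A \<in> carrier_mat d d" "\<And>x. x \<in> X \<Longrightarrow> f x \<in> carrier_mat d d"
  shows "msum d f X * A = msum d (\<lambda>x. f x * A) X"
proof (rule eq_matI)
  fix i j assume "i < dim_row (msum d (\<lambda>x. f x * A) X)" "j < dim_col (msum d (\<lambda>x. f x * A) X)"
  then have ij: "i < d" "j < d" by auto
  have "(msum d f X * A) $$ (i,j) = (\<Sum>l<d. (\<Sum>x\<in>X. f x $$ (i,l)) * A $$ (l,j))"
    using ij assms by (simp add: mult_entry[of _ d d _ d])
  also have "\<dots> = (\<Sum>x\<in>X. \<Sum>l<d. f x $$ (i,l) * A $$ (l,j))"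
    by (simp add: sum_distrib_right) (rule sum.swap)
  also have "\<dots> = msum d (\<lambda>x. f x * A) X $$ (i,j)"
    using ij assms by (simp add: mult_entry[of _ d d _ d])
  finally show "(msum d f X * A) $$ (i,j) = msum d (\<lambda>x. f x * A) X $$ (i,j)" .
qed (use assms in auto)

definition SP :: "nat \<Rightarrow> cmat set" where
  "SP n = {s \<cdot>\<^sub>m pauli a | s a. s \<in> {1,-1} \<and> a \<in> pauli_idx n}"

lemma SP_finite: "finite (SP n)"
proof -
  have "SP n = (\<lambda>(s,a). s \<cdot>\<^sub>m pauli a) ` ({1,-1} \<times> pauli_idx n)"
    by (auto simp: SP_def image_iff)
  then show ?thesis by simp
qed

lemma SP_carrier: "x \<in> SP n \<Longrightarrow> x \<in> carrier_mat (2^n) (2^n)"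
  by (auto simp: SP_def pauli_idx_def)

lemma Clifford_D:
  assumes "g \<in> Clifford n"
  shows "g \<in> carrier_mat (2^n) (2^n)" "dag g * g = 1\<^sub>m (2^n)" "g * dag g = 1\<^sub>m (2^n)"
    "\<And>a. a \<in> pauli_idx n \<Longrightarrow> \<exists>b\<in>pauli_idx n. \<exists>s\<in>{1,-1}. g * pauli a * dag g = s \<cdot>\<^sub>m pauli b"
  using assms by (auto simp: Clifford_def unitary_mat_def dim_def)

lemma conj_smult:
  assumes "g \<in> carrier_mat d d" "A \<in> carrier_mat d d"
  shows "g * (c \<cdot>\<^sub>m A) * dag g = c \<cdot>\<^sub>m (g * A * dag g)"
  using assms by (simp add: mult_smult_distrib[of _ d d _ d] mult_smult_assoc_mat[of _ d d _ d])

lemma Clifford_SP: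
  assumes "g \<in> Clifford n" "x \<in> SP n"
  shows "g * x * dag g \<in> SP n"
proof -
  obtain s a where x: "x = s \<cdot>\<^sub>m pauli a" "s \<in> {1,-1}" "a \<in> pauli_idx n"
    using assms(2) by (auto simp: SP_def)
  obtain b s' where b: "b \<in> pauli_idx n" "s' \<in> {1,-1}" "g * pauli a * dag g = s' \<cdot>\<^sub>m pauli b"
    using Clifford_D(4)[OF assms(1) x(3)] by blast
  have "g * x * dag g = (s * s') \<cdot>\<^sub>m pauli b"
    using x b Clifford_D(1)[OF assms(1)] pauli_carrier[of a]
    by (simp add: conj_smult[of _ "2^n"] smult_smult_mat pauli_idx_def)
  moreover have "s * s' \<in> {1,-1}" using x b by auto
  ultimately show ?thesis using b by (auto simp: SP_def)
qed

lemma unconj: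
  assumes "g \<in> Clifford n" "x \<in> carrier_mat (2^n) (2^n)"
  shows "dag g * (g * x * dag g) * g = x"
proof -
  note gc = Clifford_D[OF assms(1)]
  have c: "dag g \<in> carrier_mat (2^n) (2^n)" using gc(1) by simp
  have gx: "g * x \<in> carrier_mat (2^n) (2^n)" using gc(1) assms(2) by simp
  have e1: "dag g * (g * x * dag g) * g = dag g * ((g * x * dag g) * g)"
    by (rule assoc_mult_mat[OF c mult_carrier_mat[OF gx c] gc(1)])
  have e2: "(g * x * dag g) * g = (g * x) * (dag g * g)"
    by (rule assoc_mult_mat[OF gx c gc(1)])
  have e3: "(g * x) * (dag g * g) = g * x" unfolding gc(2) using gx by (rule right_mult_one_mat)
  have e4: "dag g * (g * x) = (dag g * g) * x"
    by (rule assoc_mult_mat[OF c gc(1) assms(2), symmetric])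
  have e5: "(dag g * g) * x = x" unfolding gc(2) using assms(2) by (rule left_mult_one_mat)
  show ?thesis unfolding e1 e2 e3 e4 e5 ..
qed

lemma Zz_SP:
  assumes "z \<in> bitvecs n" shows "Zz z \<in> SP n"
  unfolding SP_def Zz_def using assms
  by (auto simp: bitvecs_def pauli_idx_def one_smult_mat' intro!: exI[of _ 1])

lemma Xi_exists:
  assumes "g \<in> Clifford n" "z \<in> bitvecs n"
  shows "\<exists>s b. s \<in> {1,-1} \<and> b \<in> pauli_idx n \<and> dag g * Zz z * g = s \<cdot>\<^sub>m pauli b"
proof -
  let ?f = "\<lambda>x. g * x * dag g"
  have "inj_on ?f (SP n)"
  proof (rule inj_onI)
    fix x y assume xy: "x \<in> SP n" "y \<in> SP n" and eq: "?f x = ?f y"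
    have "dag g * ?f x * g = dag g * ?f y * g" using eq by simp
    then show "x = y" using unconj[OF assms(1) SP_carrier[OF xy(1)]] unconj[OF assms(1) SP_carrier[OF xy(2)]] by simp
  qed
  then have "?f ` SP n = SP n"
    using SP_finite Clifford_SP[OF assms(1)] by (intro endo_inj_surj) auto
  then obtain y where y: "y \<in> SP n" "Zz z = ?f y" using Zz_SP[OF assms(2)] by blast
  then have "dag g * Zz z * g = y" using unconj[OF assms(1) SP_carrier[OF y(1)]] by simp
  then show ?thesis using y(1) by (auto simp: SP_def)
qed

lemma Xi_eq:
  assumes "s \<in> {1,-1}" "b \<in> pauli_idx n" "dag g * Zz z * g = s \<cdot>\<^sub>m pauli b"
  shows "Xi n z g = pauli b"
proof -
  have P: "b \<in> pauli_idx n \<and> (dag g * Zz z * g = pauli b \<or> dag g * Zz z * g = - pauli b)"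
    using assms by (auto simp: one_smult_mat' neg_one_smult_mat)
  have "(THE b. b \<in> pauli_idx n \<and> (dag g * Zz z * g = pauli b \<or> dag g * Zz z * g = - pauli b)) = b"
  proof (rule the_equality)
    fix b' assume b': "b' \<in> pauli_idx n \<and> (dag g * Zz z * g = pauli b' \<or> dag g * Zz z * g = - pauli b')"
    have "\<exists>s'. s' \<in> {1,-1} \<and> dag g * Zz z * g = s' \<cdot>\<^sub>m pauli b'"
    proof (cases "dag g * Zz z * g = pauli b'")
      case True then show ?thesis by (intro exI[of _ 1]) (simp add: one_smult_mat')
    next
      case False then show ?thesis using b' by (intro exI[of _ "-1"]) (simp add: neg_one_smult_mat)
    qed
    then obtain s' where "s' \<in> {1,-1}" "dag g * Zz z * g = s' \<cdot>\<^sub>m pauli b'" by blast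
    then show "b' = b" using signed_pauli_unique[of b' b s' s] assms b' by (auto simp: pauli_idx_def)
  qed (rule P)
  then show ?thesis by (simp add: Xi_def)
qed



lemma tr_cyc:
  assumes "Z \<in> carrier_mat d d" "g \<in> carrier_mat d d" "C \<in> carrier_mat d d"
  shows "tr (Z * (g * C * dag g)) = tr ((dag g * Z * g) * C)"
proof -
  have D: "dag g \<in> carrier_mat d d" using assms by simp
  have "tr (dag g * (Z * (g * C))) = tr ((Z * (g * C)) * dag g)"
    using assms D by (intro tr_mult_comm[of _ d d]) auto
  then show ?thesis using assms D by (simp add: assoc_mult_mat[of _ d d _ d _ d])
qed

lemma sandwich_smult:
  fixes A B E :: cmat
  assumes "A \<in> carrier_mat d d" "B \<in> carrier_mat d d" "E \<in> carrier_mat d d"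
  shows "A * (c \<cdot>\<^sub>m B) * E = c \<cdot>\<^sub>m (A * B * E)"
proof -
  have "A * (c \<cdot>\<^sub>m B) = c \<cdot>\<^sub>m (A * B)" by (rule mult_smult_distrib[OF assms(1,2)])
  moreover have "(c \<cdot>\<^sub>m (A * B)) * E = c \<cdot>\<^sub>m (A * B * E)"
    by (rule mult_smult_assoc_mat[OF mult_carrier_mat[OF assms(1,2)] assms(3)])
  ultimately show ?thesis by simp
qed

lemma dag_Zz[simp]: "dag (Zz z) = Zz z"
  by (simp add: Zz_def)

lemma omega_frame:
  assumes g: "g \<in> Clifford n" and C: "C \<in> carrier_mat (2^n) (2^n)"
  shows "omega_dag g (Mop n (omega g C))
       = msum (2^n) (\<lambda>z. (hs (Xi n z g) C / 2^n) \<cdot>\<^sub>m Xi n z g) (bitvecs n)"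
proof -
  note gc = Clifford_D[OF g]
  have D: "dag g \<in> carrier_mat (2^n) (2^n)" using gc(1) by simp
  have X: "g * C * dag g \<in> carrier_mat (2^n) (2^n)" using mult_carrier_mat[OF mult_carrier_mat[OF gc(1) C] D] .
  have Zc: "\<And>z. z \<in> bitvecs n \<Longrightarrow> Zz z \<in> carrier_mat (2^n) (2^n)"
    using Zz_carrier by (auto simp: bitvecs_def)
  have "omega_dag g (Mop n (omega g C))
      = dag g * msum (2^n) (\<lambda>z. (hs (Zz z) (g * C * dag g) / 2^n) \<cdot>\<^sub>m Zz z) (bitvecs n) * g"
    unfolding omega_dag_def omega_def Mop_Zz[OF X] ..
  also have "\<dots> = msum (2^n) (\<lambda>z. dag g * ((hs (Zz z) (g * C * dag g) / 2^n) \<cdot>\<^sub>m Zz z) * g) (bitvecs n)"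
  proof -
    have "dag g * msum (2^n) (\<lambda>z. (hs (Zz z) (g * C * dag g) / 2^n) \<cdot>\<^sub>m Zz z) (bitvecs n)
        = msum (2^n) (\<lambda>z. dag g * ((hs (Zz z) (g * C * dag g) / 2^n) \<cdot>\<^sub>m Zz z)) (bitvecs n)"
      using D Zc by (intro msum_mult_left) auto
    moreover have "msum (2^n) (\<lambda>z. dag g * ((hs (Zz z) (g * C * dag g) / 2^n) \<cdot>\<^sub>m Zz z)) (bitvecs n) * g
        = msum (2^n) (\<lambda>z. dag g * ((hs (Zz z) (g * C * dag g) / 2^n) \<cdot>\<^sub>m Zz z) * g) (bitvecs n)"
      using D Zc gc(1) by (intro msum_mult_right) (auto intro!: mult_carrier_mat[OF D])
    ultimately show ?thesis by simp
  qed
  also have "\<dots> = msum (2^n) (\<lambda>z. (hs (Xi n z g) C / 2^n) \<cdot>\<^sub>m Xi n z g) (bitvecs n)"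
  proof (rule msum_cong)
    fix z assume z: "z \<in> bitvecs n"
    obtain s b where sb: "s \<in> {1,-1}" "b \<in> pauli_idx n" "dag g * Zz z * g = s \<cdot>\<^sub>m pauli b"
      using Xi_exists[OF g z] by blast
    have Xi: "Xi n z g = pauli b" by (rule Xi_eq[OF sb])
    have P: "pauli b \<in> carrier_mat (2^n) (2^n)" using sb(2) pauli_carrier[of b] by (simp add: pauli_idx_def)
    have "hs (Zz z) (g * C * dag g) = tr ((dag g * Zz z * g) * C)"
      unfolding hs_def dag_Zz using Zc[OF z] gc(1) C by (rule tr_cyc)
    also have "\<dots> = s * hs (pauli b) C"
      unfolding sb(3) hs_def pauli_dag using P C
      by (simp add: mult_smult_assoc_mat[of _ "2^n" "2^n" _ "2^n"] tr_smult[of _ "2^n"])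
    finally have h: "hs (Zz z) (g * C * dag g) = s * hs (pauli b) C" .
    have "dag g * ((hs (Zz z) (g * C * dag g) / 2^n) \<cdot>\<^sub>m Zz z) * g
        = (hs (Zz z) (g * C * dag g) / 2^n) \<cdot>\<^sub>m (dag g * Zz z * g)"
      by (rule sandwich_smult[OF D Zc[OF z] gc(1)])
    also have "\<dots> = (s * s * hs (pauli b) C / 2^n) \<cdot>\<^sub>m pauli b"
      unfolding sb(3) h by (simp add: smult_smult_mat mult_ac)
    also have "\<dots> = (hs (Xi n z g) C / 2^n) \<cdot>\<^sub>m Xi n z g"
      using sb(1) Xi by auto
    finally show "dag g * ((hs (Zz z) (g * C * dag g) / 2^n) \<cdot>\<^sub>m Zz z) * g
        = (hs (Xi n z g) C / 2^n) \<cdot>\<^sub>m Xi n z g" .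
  qed
  finally show ?thesis .
qed



lemma Xi_in:
  assumes "g \<in> Clifford n" "z \<in> bitvecs n"
  shows "\<exists>b\<in>pauli_idx n. Xi n z g = pauli b"
  using Xi_exists[OF assms] Xi_eq by blast

lemma Xi_carrier:
  assumes "g \<in> Clifford n" "z \<in> bitvecs n"
  shows "Xi n z g \<in> carrier_mat (2^n) (2^n)"
  using Xi_in[OF assms] pauli_carrier by (auto simp: pauli_idx_def)

lemma pauli_idx_inj: "a \<in> pauli_idx n \<Longrightarrow> b \<in> pauli_idx n \<Longrightarrow> pauli a = pauli b \<Longrightarrow> a = b"
  using pauli_inj by (auto simp: pauli_idx_def)

lemma group_Xi:
  fixes F :: "cmat \<Rightarrow> bool list \<Rightarrow> cmat \<Rightarrow> 'a::comm_monoid_add"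
  assumes G: "finite G" "G \<subseteq> Clifford n"
  shows "(\<Sum>g\<in>G. \<Sum>z\<in>bitvecs n. F g z (Xi n z g))
       = (\<Sum>a\<in>pauli_idx n. \<Sum>z\<in>bitvecs n. \<Sum>g\<in>{g\<in>G. Xi n z g = pauli a}. F g z (pauli a))"
proof -
  have "(\<Sum>a\<in>pauli_idx n. \<Sum>z\<in>bitvecs n. \<Sum>g\<in>{g\<in>G. Xi n z g = pauli a}. F g z (pauli a))
      = (\<Sum>a\<in>pauli_idx n. \<Sum>z\<in>bitvecs n. \<Sum>g\<in>G. if Xi n z g = pauli a then F g z (pauli a) else 0)"
    using G by (simp add: sum.inter_filter)
  also have "\<dots> = (\<Sum>z\<in>bitvecs n. \<Sum>g\<in>G. \<Sum>a\<in>pauli_idx n. if Xi n z g = pauli a then F g z (pauli a) else 0)"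
  proof -
    have "(\<Sum>a\<in>pauli_idx n. \<Sum>z\<in>bitvecs n. \<Sum>g\<in>G. if Xi n z g = pauli a then F g z (pauli a) else 0)
        = (\<Sum>z\<in>bitvecs n. \<Sum>a\<in>pauli_idx n. \<Sum>g\<in>G. if Xi n z g = pauli a then F g z (pauli a) else 0)"
      by (rule sum.swap)
    also have "\<dots> = (\<Sum>z\<in>bitvecs n. \<Sum>g\<in>G. \<Sum>a\<in>pauli_idx n. if Xi n z g = pauli a then F g z (pauli a) else 0)"
      by (intro sum.cong refl) (rule sum.swap)
    finally show ?thesis .
  qed
  also have "\<dots> = (\<Sum>z\<in>bitvecs n. \<Sum>g\<in>G. F g z (Xi n z g))"
  proof (intro sum.cong refl)
    fix z g assume z: "z \<in> bitvecs n" and g: "g \<in> G"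
    obtain b where b: "b \<in> pauli_idx n" "Xi n z g = pauli b" using Xi_in[of g n z] G g z by blast
    have "(\<Sum>a\<in>pauli_idx n. if Xi n z g = pauli a then F g z (pauli a) else 0)
        = (if Xi n z g = pauli b then F g z (pauli b) else 0)"
      using b by (intro sum_single) (auto dest: pauli_idx_inj)
    then show "(\<Sum>a\<in>pauli_idx n. if Xi n z g = pauli a then F g z (pauli a) else 0) = F g z (Xi n z g)"
      using b by simp
  qed
  also have "\<dots> = (\<Sum>g\<in>G. \<Sum>z\<in>bitvecs n. F g z (Xi n z g))"
    by (rule sum.swap)
  finally show ?thesis by simp
qed

lemma frame_generic:
  assumes G: "finite G" "G \<subseteq> Clifford n"
    and Cg: "\<And>g. g \<in> G \<Longrightarrow> Cg g \<in> carrier_mat (2^n) (2^n)"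
    and ij: "i < 2^n" "j < 2^n"
  shows "msum (2^n) (\<lambda>g. complex_of_real (p g) \<cdot>\<^sub>m omega_dag g (Mop n (omega g (Cg g)))) G $$ (i,j)
       = (\<Sum>a\<in>pauli_idx n. \<Sum>z\<in>bitvecs n. \<Sum>g\<in>{g\<in>G. Xi n z g = pauli a}.
            complex_of_real (p g) * (hs (pauli a) (Cg g) / 2^n * pauli a $$ (i,j)))"
proof -
  have "msum (2^n) (\<lambda>g. complex_of_real (p g) \<cdot>\<^sub>m omega_dag g (Mop n (omega g (Cg g)))) G $$ (i,j)
     = (\<Sum>g\<in>G. \<Sum>z\<in>bitvecs n. complex_of_real (p g) * (hs (Xi n z g) (Cg g) / 2^n * Xi n z g $$ (i,j)))"
  proof -
    have "\<And>g. g \<in> G \<Longrightarrow> (complex_of_real (p g) \<cdot>\<^sub>m omega_dag g (Mop n (omega g (Cg g)))) $$ (i,j)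
       = (\<Sum>z\<in>bitvecs n. complex_of_real (p g) * (hs (Xi n z g) (Cg g) / 2^n * Xi n z g $$ (i,j)))"
    proof -
      fix g assume g: "g \<in> G"
      have gC: "g \<in> Clifford n" using g G by auto
      show "(complex_of_real (p g) \<cdot>\<^sub>m omega_dag g (Mop n (omega g (Cg g)))) $$ (i,j)
       = (\<Sum>z\<in>bitvecs n. complex_of_real (p g) * (hs (Xi n z g) (Cg g) / 2^n * Xi n z g $$ (i,j)))"
        unfolding omega_frame[OF gC Cg[OF g]]
        using ij
        apply (simp add: sum_distrib_left)
        apply (intro sum.cong refl)
        subgoal for z using Xi_carrier[OF gC, of z] by (simp add: carrier_matD)
        done
    qed
    then show ?thesis using ij by simp
  qed
  also have "\<dots> = (\<Sum>a\<in>pauli_idx n. \<Sum>z\<in>bitvecs n. \<Sum>g\<in>{g\<in>G. Xi n z g = pauli a}.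
            complex_of_real (p g) * (hs (pauli a) (Cg g) / 2^n * pauli a $$ (i,j)))"
    by (rule group_Xi[OF G, where F = "\<lambda>g z X. complex_of_real (p g) * (hs X (Cg g) / 2^n * X $$ (i,j))"])
  finally show ?thesis .
qed



lemma sandwich_cancel:
  fixes U V X :: cmat
  assumes U: "U \<in> carrier_mat d d" and V: "V \<in> carrier_mat d d" and VU: "V * U = 1\<^sub>m d"
    and X: "X \<in> carrier_mat d d"
  shows "V * (U * X * V) * U = X"
proof -
  have gx: "U * X \<in> carrier_mat d d" using U X by simp
  have e1: "V * (U * X * V) * U = V * ((U * X * V) * U)"
    by (rule assoc_mult_mat[OF V mult_carrier_mat[OF gx V] U])
  have e2: "(U * X * V) * U = (U * X) * (V * U)"
    by (rule assoc_mult_mat[OF gx V U])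
  have e3: "(U * X) * (V * U) = U * X" unfolding VU using gx by (rule right_mult_one_mat)
  have e4: "V * (U * X) = (V * U) * X"
    by (rule assoc_mult_mat[OF V U X, symmetric])
  have e5: "(V * U) * X = X" unfolding VU using X by (rule left_mult_one_mat)
  show ?thesis unfolding e1 e2 e3 e4 e5 ..
qed

lemma Xi_inj:
  assumes g: "g \<in> Clifford n" and z: "z \<in> bitvecs n" and z': "z' \<in> bitvecs n"
    and eq: "Xi n z g = Xi n z' g"
  shows "z = z'"
proof -
  note gc = Clifford_D[OF g]
  have D: "dag g \<in> carrier_mat (2^n) (2^n)" using gc(1) by simp
  obtain s b where sb: "s \<in> {1,-1}" "b \<in> pauli_idx n" "dag g * Zz z * g = s \<cdot>\<^sub>m pauli b"
    using Xi_exists[OF g z] by blast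
  obtain s' b' where sb': "s' \<in> {1,-1}" "b' \<in> pauli_idx n" "dag g * Zz z' * g = s' \<cdot>\<^sub>m pauli b'"
    using Xi_exists[OF g z'] by blast
  have "pauli b = pauli b'" using eq Xi_eq[OF sb] Xi_eq[OF sb'] by simp
  then have bb: "b' = b" using pauli_idx_inj sb sb' by metis
  have P: "pauli b \<in> carrier_mat (2^n) (2^n)" using sb(2) pauli_carrier[of b] by (simp add: pauli_idx_def)
  have Zc: "Zz z \<in> carrier_mat (2^n) (2^n)" "Zz z' \<in> carrier_mat (2^n) (2^n)"
    using z z' Zz_carrier by (auto simp: bitvecs_def)
  have "Zz z = g * (dag g * Zz z * g) * dag g"
    using sandwich_cancel[OF D gc(1) gc(3) Zc(1)] by simp
  also have "\<dots> = s \<cdot>\<^sub>m (g * pauli b * dag g)" unfolding sb(3) by (rule sandwich_smult[OF gc(1) P D])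
  finally have 1: "Zz z = s \<cdot>\<^sub>m (g * pauli b * dag g)" .
  have "Zz z' = g * (dag g * Zz z' * g) * dag g"
    using sandwich_cancel[OF D gc(1) gc(3) Zc(2)] by simp
  also have "\<dots> = s' \<cdot>\<^sub>m (g * pauli b * dag g)" unfolding sb'(3) bb by (rule sandwich_smult[OF gc(1) P D])
  finally have 2: "Zz z' = s' \<cdot>\<^sub>m (g * pauli b * dag g)" .
  have "s' \<cdot>\<^sub>m pauli (map (\<lambda>b. (b, False)) z) = s \<cdot>\<^sub>m pauli (map (\<lambda>b. (b, False)) z')"
    using 1 2 unfolding Zz_def[symmetric] by (simp add: smult_smult_mat mult.commute)
  then have "map (\<lambda>b. (b, False)) z = map (\<lambda>b. (b, False)) z'"
    using signed_pauli_unique[of "map (\<lambda>b. (b, False)) z" "map (\<lambda>b. (b, False)) z'" s' s] sb sb' z z'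
    by (auto simp: bitvecs_def)
  then show ?thesis by (simp add: inj_map_eq_map inj_on_def)
qed

lemma s_coef_nonneg:
  assumes "\<forall>g\<in>G. p g \<ge> 0"
  shows "s_coef n G p a \<ge> 0"
  unfolding s_coef_def using assms by (intro sum_nonneg) auto

lemma s_coef_le1:
  assumes G: "finite G" "G \<subseteq> Clifford n" and p: "\<forall>g\<in>G. p g \<ge> 0" "(\<Sum>g\<in>G. p g) = 1"
  shows "s_coef n G p a \<le> 1"
proof -
  have "s_coef n G p a = (\<Sum>z\<in>bitvecs n. \<Sum>g\<in>G. if Xi n z g = pauli a then p g else 0)"
    unfolding s_coef_def using G by (simp add: sum.inter_filter)
  also have "\<dots> = (\<Sum>g\<in>G. \<Sum>z\<in>bitvecs n. if Xi n z g = pauli a then p g else 0)"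
    by (rule sum.swap)
  also have "\<dots> = (\<Sum>g\<in>G. p g * card {z\<in>bitvecs n. Xi n z g = pauli a})"
    by (simp add: sum.inter_filter[symmetric] mult.commute)
  also have "\<dots> \<le> (\<Sum>g\<in>G. p g)"
  proof (rule sum_mono)
    fix g assume g: "g \<in> G"
    have "card {z\<in>bitvecs n. Xi n z g = pauli a} \<le> Suc 0"
      using Xi_inj[of g n] g G by (subst card_le_Suc0_iff_eq) auto
    then show "p g * card {z\<in>bitvecs n. Xi n z g = pauli a} \<le> p g"
      using p g by (simp add: mult_left_le)
  qed
  finally show ?thesis using p by simp
qed

lemma frame_decomp:
  assumes G: "finite G" "G \<subseteq> Clifford n" and C: "C \<in> carrier_mat (dim n) (dim n)"
  shows "frame_op n G p C =
              msum (dim n) (\<lambda>a. complex_of_real (s_coef n G p a / real (dim n)) \<cdot>\<^sub>m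
                               ketbra (pauli a) (pauli a) C) (pauli_idx n)"
proof (rule eq_matI)
  fix i j assume "i < dim_row (msum (dim n) (\<lambda>a. complex_of_real (s_coef n G p a / real (dim n)) \<cdot>\<^sub>m
                               ketbra (pauli a) (pauli a) C) (pauli_idx n))"
    "j < dim_col (msum (dim n) (\<lambda>a. complex_of_real (s_coef n G p a / real (dim n)) \<cdot>\<^sub>m
                               ketbra (pauli a) (pauli a) C) (pauli_idx n))"
  then have ij: "i < 2^n" "j < 2^n" by (auto simp: dim_def)
  have C': "C \<in> carrier_mat (2^n) (2^n)" using C by (simp add: dim_def)
  have "frame_op n G p C $$ (i,j) = (\<Sum>a\<in>pauli_idx n. \<Sum>z\<in>bitvecs n. \<Sum>g\<in>{g\<in>G. Xi n z g = pauli a}.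
            complex_of_real (p g) * (hs (pauli a) C / 2^n * pauli a $$ (i,j)))"
    unfolding frame_op_def dim_def by (rule frame_generic[OF G C' ij])
  also have "\<dots> = msum (dim n) (\<lambda>a. complex_of_real (s_coef n G p a / real (dim n)) \<cdot>\<^sub>m
                               ketbra (pauli a) (pauli a) C) (pauli_idx n) $$ (i,j)"
    using ij
    apply (simp add: dim_def ketbra_def)
    apply (intro sum.cong refl)
    subgoal for a
      using pauli_carrier[of a]
      by (simp add: pauli_idx_def s_coef_def sum_distrib_right sum_divide_distrib carrier_matD)
    done
  finally show "frame_op n G p C $$ (i,j) = msum (dim n) (\<lambda>a. complex_of_real (s_coef n G p a / real (dim n)) \<cdot>\<^sub>m
                               ketbra (pauli a) (pauli a) C) (pauli_idx n) $$ (i,j)" .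
qed (auto simp: frame_op_def)



lemma pauli_idx_carrier: "a \<in> pauli_idx n \<Longrightarrow> pauli a \<in> carrier_mat (2^n) (2^n)"
  using pauli_carrier[of a] by (simp add: pauli_idx_def)

lemma frame_pauli:
  assumes G: "finite G" "G \<subseteq> Clifford n" and a: "a \<in> pauli_idx n"
  shows "frame_op n G p (pauli a) = complex_of_real (s_coef n G p a) \<cdot>\<^sub>m pauli a"
proof -
  have Pa: "pauli a \<in> carrier_mat (dim n) (dim n)" using pauli_idx_carrier[OF a] by (simp add: dim_def)
  show ?thesis
  proof (rule eq_matI)
    fix i j assume "i < dim_row (complex_of_real (s_coef n G p a) \<cdot>\<^sub>m pauli a)"
      "j < dim_col (complex_of_real (s_coef n G p a) \<cdot>\<^sub>m pauli a)"
    then have ij: "i < 2^n" "j < 2^n" using a by (auto simp: pauli_idx_def)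
    have "frame_op n G p (pauli a) $$ (i,j)
       = (\<Sum>b\<in>pauli_idx n. complex_of_real (s_coef n G p b / real (dim n)) * (hs (pauli b) (pauli a) * pauli b $$ (i,j)))"
      unfolding frame_decomp[OF G Pa] using ij
      apply (simp add: dim_def ketbra_def)
      apply (intro sum.cong refl)
      subgoal for b by (simp add: pauli_idx_def)
      done
    also have "\<dots> = complex_of_real (s_coef n G p a / real (dim n)) * (hs (pauli a) (pauli a) * pauli a $$ (i,j))"
      using a by (intro sum_single pauli_idx_finite) (auto simp: hs_pauli pauli_idx_def)
    also have "\<dots> = (complex_of_real (s_coef n G p a) \<cdot>\<^sub>m pauli a) $$ (i,j)"
      using ij a by (simp add: hs_pauli dim_def pauli_idx_def)
    finally show "frame_op n G p (pauli a) $$ (i,j) = (complex_of_real (s_coef n G p a) \<cdot>\<^sub>m pauli a) $$ (i,j)" .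
  qed (use a in \<open>auto simp: frame_op_def dim_def pauli_idx_def\<close>)
qed

lemma frame_zero:
  assumes G: "finite G" "G \<subseteq> Clifford n"
  shows "frame_op n G p (0\<^sub>m (dim n) (dim n)) = 0\<^sub>m (dim n) (dim n)"
proof -
  have Z: "0\<^sub>m (dim n) (dim n) \<in> carrier_mat (dim n) (dim n)" by simp
  show ?thesis
  proof (rule eq_matI)
    fix i j assume "i < dim_row (0\<^sub>m (dim n) (dim n) :: cmat)" "j < dim_col (0\<^sub>m (dim n) (dim n) :: cmat)"
    then have ij: "i < dim n" "j < dim n" by auto
    have "\<And>b. b \<in> pauli_idx n \<Longrightarrow> hs (pauli b) (0\<^sub>m (dim n) (dim n)) = 0"
      using pauli_idx_carrier by (simp add: hs_entry[of _ "dim n" "dim n"] dim_def)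
    then show "frame_op n G p (0\<^sub>m (dim n) (dim n)) $$ (i,j) = 0\<^sub>m (dim n) (dim n) $$ (i,j)"
      unfolding frame_decomp[OF G Z] using ij pauli_idx_carrier
      by (auto simp: ketbra_def dim_def pauli_idx_def intro!: sum.neutral)
  qed (auto simp: frame_op_def)
qed

lemma s_coef_pos:
  assumes G: "finite G" "G \<subseteq> Clifford n" and p: "\<forall>g\<in>G. p g \<ge> 0"
    and S_inv: "bij_betw (frame_op n G p) (carrier_mat (dim n) (dim n)) (carrier_mat (dim n) (dim n))"
    and a: "a \<in> pauli_idx n"
  shows "s_coef n G p a > 0"
proof (rule ccontr)
  assume "\<not> s_coef n G p a > 0"
  then have s0: "s_coef n G p a = 0" using s_coef_nonneg[OF p, of n a] by linarith
  have Pa: "pauli a \<in> carrier_mat (dim n) (dim n)" using pauli_idx_carrier[OF a] by (simp add: dim_def)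
  have "frame_op n G p (pauli a) = 0\<^sub>m (dim n) (dim n)"
    unfolding frame_pauli[OF G a] s0 using Pa by (intro eq_matI) auto
  also have "\<dots> = frame_op n G p (0\<^sub>m (dim n) (dim n))" using frame_zero[OF G] by simp
  finally have "pauli a = 0\<^sub>m (dim n) (dim n)"
    using S_inv Pa by (auto simp: bij_betw_def inj_on_def)
  then have "pauli a * pauli a = 0\<^sub>m (dim n) (dim n) * 0\<^sub>m (dim n) (dim n)" by simp
  then have "1\<^sub>m (2^n) = (0\<^sub>m (dim n) (dim n) :: cmat)"
    using a pauli_sq[of a] by (simp add: pauli_idx_def dim_def)
  then have "(1\<^sub>m (2^n) :: cmat) $$ (0,0) = (0\<^sub>m (dim n) (dim n) :: cmat) $$ (0,0)" by simp
  then show False by (simp add: dim_def)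
qed

lemma chan_carrier:
  assumes "quantum_channel d L" "\<rho> \<in> carrier_mat d d"
  shows "L \<rho> \<in> carrier_mat d d"
  using assms unfolding quantum_channel_def by auto

lemma hs_Lbar:
  assumes G: "finite G" and a: "a \<in> pauli_idx n"
    and Lc: "\<And>g. g \<in> G \<Longrightarrow> L g C \<in> carrier_mat (2^n) (2^n)"
  shows "hs (pauli a) (Lbar n G p L a C) = complex_of_real (inverse (s_coef n G p a)) *
     (\<Sum>z\<in>bitvecs n. \<Sum>g\<in>{g\<in>G. Xi n z g = pauli a}. complex_of_real (p g) * hs (pauli a) (L g C))"
proof -
  have Pa: "pauli a \<in> carrier_mat (2^n) (2^n)" by (rule pauli_idx_carrier[OF a])
  have fin: "\<And>z. finite {g\<in>G. Xi n z g = pauli a}" using G by simp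
  show ?thesis
    unfolding Lbar_def dim_def
    apply (subst hs_smult[OF Pa msum_carrier])
    apply (subst hs_msum[OF Pa bitvecs_finite])
     apply simp
    apply (subst hs_msum[OF Pa fin])
     apply (simp add: Lc smult_carrier_mat)
    apply (simp add: hs_smult[OF Pa] Lc)
    done
qed



lemma noisy_decomp:
  assumes G: "finite G" "G \<subseteq> Clifford n"
    and spos: "\<And>a. a \<in> pauli_idx n \<Longrightarrow> s_coef n G p a \<noteq> 0"
    and Lc: "\<And>g. g \<in> G \<Longrightarrow> L g C \<in> carrier_mat (2^n) (2^n)"
  shows "noisy_frame_op n G p L C =
              msum (dim n) (\<lambda>a. complex_of_real (s_coef n G p a / real (dim n)) \<cdot>\<^sub>m
                               ketbra (pauli a) (pauli a) (Lbar n G p L a C)) (pauli_idx n)"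
proof (rule eq_matI)
  fix i j assume "i < dim_row (msum (dim n) (\<lambda>a. complex_of_real (s_coef n G p a / real (dim n)) \<cdot>\<^sub>m
                               ketbra (pauli a) (pauli a) (Lbar n G p L a C)) (pauli_idx n))"
    "j < dim_col (msum (dim n) (\<lambda>a. complex_of_real (s_coef n G p a / real (dim n)) \<cdot>\<^sub>m
                               ketbra (pauli a) (pauli a) (Lbar n G p L a C)) (pauli_idx n))"
  then have ij: "i < 2^n" "j < 2^n" by (auto simp: dim_def)
  have "noisy_frame_op n G p L C $$ (i,j) = (\<Sum>a\<in>pauli_idx n. \<Sum>z\<in>bitvecs n. \<Sum>g\<in>{g\<in>G. Xi n z g = pauli a}.
            complex_of_real (p g) * (hs (pauli a) (L g C) / 2^n * pauli a $$ (i,j)))"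
    unfolding noisy_frame_op_def dim_def by (rule frame_generic[OF G _ ij]) (rule Lc)
  also have "\<dots> = msum (dim n) (\<lambda>a. complex_of_real (s_coef n G p a / real (dim n)) \<cdot>\<^sub>m
                               ketbra (pauli a) (pauli a) (Lbar n G p L a C)) (pauli_idx n) $$ (i,j)"
    using ij
    apply (simp add: dim_def ketbra_def)
    apply (intro sum.cong refl)
    subgoal for a
    proof -
      assume a: "a \<in> pauli_idx n"
      have s: "s_coef n G p a \<noteq> 0" by (rule spos[OF a])
      have e: "complex_of_real (s_coef n G p a) / 2^n * complex_of_real (inverse (s_coef n G p a)) = 1 / 2^n"
        using s by (simp add: field_simps of_real_inverse[symmetric] del: of_real_inverse)
      show ?thesis
        using a ij
        apply (simp add: pauli_idx_def hs_Lbar[of G a n L C p, OF G(1) a Lc])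
        apply (simp add: sum_distrib_left sum_distrib_right sum_divide_distrib)
        apply (intro sum.cong refl)
        using s apply (simp add: field_simps)
        done
    qed
    done
  finally show "noisy_frame_op n G p L C $$ (i,j) = msum (dim n) (\<lambda>a. complex_of_real (s_coef n G p a / real (dim n)) \<cdot>\<^sub>m
                               ketbra (pauli a) (pauli a) (Lbar n G p L a C)) (pauli_idx n) $$ (i,j)" .
qed (auto simp: noisy_frame_op_def)



lemma msum_reindex:
  assumes h: "bij_betw h S T" shows "msum d (\<lambda>x. f (h x)) S = msum d f T"
proof -
  have "\<And>ij. (\<Sum>x\<in>S. f (h x) $$ ij) = (\<Sum>x\<in>T. f x $$ ij)"
    subgoal for ij using sum.reindex_bij_betw[OF h, of "\<lambda>x. f x $$ ij"] by simp
    done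
  then show ?thesis by (simp add: msum_def case_prod_unfold)
qed

lemma channel_from_set:
  fixes K :: "'i \<Rightarrow> cmat"
  assumes I: "finite I" and Kc: "\<And>i. i \<in> I \<Longrightarrow> K i \<in> carrier_mat d d"
    and sum1: "msum d (\<lambda>i. dag (K i) * K i) I = 1\<^sub>m d"
    and Lr: "\<And>\<rho>. \<rho> \<in> carrier_mat d d \<Longrightarrow> L \<rho> = msum d (\<lambda>i. K i * \<rho> * dag (K i)) I"
  shows "quantum_channel d L"
proof -
  obtain h where h: "bij_betw h {0..<card I} I" using ex_bij_betw_nat_finite[OF I] by blast
  then have h': "bij_betw h {..<card I} I" by (simp add: lessThan_atLeast0)
  define Ks where "Ks = map (\<lambda>k. K (h k)) [0..<card I]"
  have len: "length Ks = card I" by (simp add: Ks_def)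
  have nth: "\<And>k. k \<in> {..<card I} \<Longrightarrow> Ks ! k = K (h k)" by (simp add: Ks_def)
  have "set Ks \<subseteq> carrier_mat d d"
    using h Kc by (auto simp: Ks_def bij_betw_def)
  moreover have "msum d (\<lambda>k. dag (Ks ! k) * (Ks ! k)) {..<length Ks} = 1\<^sub>m d"
  proof -
    have "msum d (\<lambda>k. dag (Ks ! k) * (Ks ! k)) {..<length Ks} = msum d (\<lambda>k. dag (K (h k)) * K (h k)) {..<card I}"
      unfolding len using nth by (intro msum_cong) auto
    also have "\<dots> = 1\<^sub>m d" using msum_reindex[OF h', of d "\<lambda>i. dag (K i) * K i"] sum1 by simp
    finally show ?thesis .
  qed
  moreover have "\<forall>\<rho>\<in>carrier_mat d d. L \<rho> = msum d (\<lambda>k. (Ks ! k) * \<rho> * dag (Ks ! k)) {..<length Ks}"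
  proof
    fix \<rho> :: cmat assume r: "\<rho> \<in> carrier_mat d d"
    have "msum d (\<lambda>k. (Ks ! k) * \<rho> * dag (Ks ! k)) {..<length Ks} = msum d (\<lambda>k. K (h k) * \<rho> * dag (K (h k))) {..<card I}"
      unfolding len using nth by (intro msum_cong) auto
    also have "\<dots> = L \<rho>" using msum_reindex[OF h', of d "\<lambda>i. K i * \<rho> * dag (K i)"] Lr[OF r] by simp
    finally show "L \<rho> = msum d (\<lambda>k. (Ks ! k) * \<rho> * dag (Ks ! k)) {..<length Ks}" by simp
  qed
  ultimately show ?thesis unfolding quantum_channel_def by blast
qed

lemma kraus_scale:
  fixes K \<rho> :: cmat
  assumes K: "K \<in> carrier_mat d d" and r: "\<rho> \<in> carrier_mat d d" and w: "w \<ge> 0"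
  shows "(complex_of_real (sqrt w) \<cdot>\<^sub>m K) * \<rho> * dag (complex_of_real (sqrt w) \<cdot>\<^sub>m K)
           = complex_of_real w \<cdot>\<^sub>m (K * \<rho> * dag K)"
    "dag (complex_of_real (sqrt w) \<cdot>\<^sub>m K) * (complex_of_real (sqrt w) \<cdot>\<^sub>m K)
           = complex_of_real w \<cdot>\<^sub>m (dag K * K)"
proof -
  have sq: "complex_of_real (sqrt w) * complex_of_real (sqrt w) = complex_of_real w"
    using w by (simp flip: of_real_mult)
  have D: "dag K \<in> carrier_mat d d" using K by simp
  let ?c = "complex_of_real (sqrt w)"
  have Kr: "K * \<rho> \<in> carrier_mat d d" using K r by simp
  have "(?c \<cdot>\<^sub>m K) * \<rho> = ?c \<cdot>\<^sub>m (K * \<rho>)" by (rule mult_smult_assoc_mat[OF K r])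
  moreover have "(?c \<cdot>\<^sub>m (K * \<rho>)) * (?c \<cdot>\<^sub>m dag K) = ?c \<cdot>\<^sub>m ((K * \<rho>) * (?c \<cdot>\<^sub>m dag K))"
    by (rule mult_smult_assoc_mat[OF Kr smult_carrier_mat[OF D]])
  moreover have "(K * \<rho>) * (?c \<cdot>\<^sub>m dag K) = ?c \<cdot>\<^sub>m (K * \<rho> * dag K)"
    by (rule mult_smult_distrib[OF Kr D])
  ultimately show "(complex_of_real (sqrt w) \<cdot>\<^sub>m K) * \<rho> * dag (complex_of_real (sqrt w) \<cdot>\<^sub>m K)
           = complex_of_real w \<cdot>\<^sub>m (K * \<rho> * dag K)"
    unfolding dag_smult using sq by (simp add: smult_smult_mat)
  have "(?c \<cdot>\<^sub>m dag K) * (?c \<cdot>\<^sub>m K) = ?c \<cdot>\<^sub>m (dag K * (?c \<cdot>\<^sub>m K))"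
    by (rule mult_smult_assoc_mat[OF D smult_carrier_mat[OF K]])
  moreover have "dag K * (?c \<cdot>\<^sub>m K) = ?c \<cdot>\<^sub>m (dag K * K)"
    by (rule mult_smult_distrib[OF D K])
  ultimately show "dag (complex_of_real (sqrt w) \<cdot>\<^sub>m K) * (complex_of_real (sqrt w) \<cdot>\<^sub>m K)
           = complex_of_real w \<cdot>\<^sub>m (dag K * K)"
    unfolding dag_smult using sq by (simp add: smult_smult_mat)
qed



lemma sum_Sigma3:
  fixes f :: "'a \<times> 'b \<times> 'c \<Rightarrow> 'd::comm_monoid_add"
  assumes "finite A" "\<And>z. z \<in> A \<Longrightarrow> finite (B z)" "\<And>g. finite (C g)"
  shows "(\<Sum>x\<in>Sigma A (\<lambda>z. Sigma (B z) C). f x) = (\<Sum>z\<in>A. \<Sum>g\<in>B z. \<Sum>k\<in>C g. f (z,g,k))"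
proof -
  have "(\<Sum>z\<in>A. \<Sum>g\<in>B z. \<Sum>k\<in>C g. f (z,g,k)) = (\<Sum>z\<in>A. \<Sum>y\<in>Sigma (B z) C. f (z,y))"
    using assms by (intro sum.cong refl) (simp add: sum.Sigma split_def)
  also have "\<dots> = (\<Sum>x\<in>Sigma A (\<lambda>z. Sigma (B z) C). f x)"
    using assms by (simp add: sum.Sigma split_def)
  finally show ?thesis by simp
qed

lemma Lbar_channel:
  assumes G: "finite G" and p: "\<forall>g\<in>G. p g \<ge> 0" and s: "s_coef n G p a > 0"
    and Lch: "\<forall>g\<in>G. quantum_channel (dim n) (L g)"
  shows "quantum_channel (dim n) (Lbar n G p L a)"
proof -
  let ?d = "dim n"
  let ?S = "s_coef n G p a"
  let ?A = "\<lambda>z. {g\<in>G. Xi n z g = pauli a}"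
  obtain Ks where Ks: "\<forall>g\<in>G. set (Ks g) \<subseteq> carrier_mat ?d ?d \<and>
      msum ?d (\<lambda>k. dag (Ks g ! k) * (Ks g ! k)) {..<length (Ks g)} = 1\<^sub>m ?d \<and>
      (\<forall>\<rho>\<in>carrier_mat ?d ?d. L g \<rho> = msum ?d (\<lambda>k. (Ks g ! k) * \<rho> * dag (Ks g ! k)) {..<length (Ks g)})"
  proof -
    have "\<forall>g\<in>G. \<exists>Ks. set Ks \<subseteq> carrier_mat ?d ?d \<and>
      msum ?d (\<lambda>k. dag (Ks ! k) * (Ks ! k)) {..<length Ks} = 1\<^sub>m ?d \<and>
      (\<forall>\<rho>\<in>carrier_mat ?d ?d. L g \<rho> = msum ?d (\<lambda>k. (Ks ! k) * \<rho> * dag (Ks ! k)) {..<length Ks})"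
      using Lch unfolding quantum_channel_def by blast
    from bchoice[OF this] show ?thesis using that by blast
  qed
  have Ks1: "\<And>g. g \<in> G \<Longrightarrow> set (Ks g) \<subseteq> carrier_mat ?d ?d" using Ks by blast
  have Ks2: "\<And>g. g \<in> G \<Longrightarrow> msum ?d (\<lambda>k. dag (Ks g ! k) * (Ks g ! k)) {..<length (Ks g)} = 1\<^sub>m ?d"
    using Ks by blast
  have Ks3: "\<And>g \<rho>. g \<in> G \<Longrightarrow> \<rho> \<in> carrier_mat ?d ?d \<Longrightarrow> L g \<rho> = msum ?d (\<lambda>k. (Ks g ! k) * \<rho> * dag (Ks g ! k)) {..<length (Ks g)}"
    using Ks by blast
  define I where "I = Sigma (bitvecs n) (\<lambda>z. Sigma (?A z) (\<lambda>g. {..<length (Ks g)}))"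
  define w where "w = (\<lambda>g. p g / ?S)"
  define K where "K = (\<lambda>x::bool list \<times> cmat \<times> nat. complex_of_real (sqrt (w (fst (snd x)))) \<cdot>\<^sub>m (Ks (fst (snd x)) ! snd (snd x)))"
  have w0: "\<And>g. g \<in> G \<Longrightarrow> w g \<ge> 0" using p s by (simp add: w_def)
  have Kk: "\<And>g k. g \<in> G \<Longrightarrow> k < length (Ks g) \<Longrightarrow> Ks g ! k \<in> carrier_mat ?d ?d"
    using Ks1 by (meson nth_mem subsetD)
  have finA: "\<And>z. finite (?A z)" using G by simp
  have sumI: "\<And>f :: _ \<Rightarrow> complex. (\<Sum>x\<in>I. f x) = (\<Sum>z\<in>bitvecs n. \<Sum>g\<in>?A z. \<Sum>k<length (Ks g). f (z,g,k))"
    unfolding I_def by (rule sum_Sigma3) (use finA in auto)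
  have Sdef: "(\<Sum>z\<in>bitvecs n. \<Sum>g\<in>?A z. complex_of_real (w g)) = 1"
  proof -
    have "(\<Sum>z\<in>bitvecs n. \<Sum>g\<in>?A z. complex_of_real (w g)) = complex_of_real ((\<Sum>z\<in>bitvecs n. \<Sum>g\<in>?A z. p g) / ?S)"
      by (simp add: w_def sum_divide_distrib)
    also have "\<dots> = 1" using s by (simp add: s_coef_def)
    finally show ?thesis .
  qed
  show ?thesis
  proof (rule channel_from_set[where I = I and K = K])
    show "finite I" unfolding I_def using finA by (intro finite_SigmaI) auto
    show "\<And>i. i \<in> I \<Longrightarrow> K i \<in> carrier_mat ?d ?d"
      unfolding I_def K_def using Kk by auto
    show "msum ?d (\<lambda>i. dag (K i) * K i) I = 1\<^sub>m ?d"
    proof (rule eq_matI)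
      fix i j assume ij: "i < dim_row (1\<^sub>m ?d :: cmat)" "j < dim_col (1\<^sub>m ?d :: cmat)"
      have "msum ?d (\<lambda>i. dag (K i) * K i) I $$ (i,j)
          = (\<Sum>z\<in>bitvecs n. \<Sum>g\<in>?A z. complex_of_real (w g) * (\<Sum>k<length (Ks g). (dag (Ks g ! k) * (Ks g ! k)) $$ (i,j)))"
        using ij unfolding msum_index[OF ij[simplified]] sumI
        apply (intro sum.cong refl)
        apply (simp only: sum_distrib_left)
        apply (intro sum.cong refl)
        subgoal for z g k
          using kraus_scale(2)[OF Kk[of g k] zero_carrier_mat w0[of g]] ij Kk[of g k]
          by (simp add: K_def carrier_matD)
        done
      also have "\<dots> = (\<Sum>z\<in>bitvecs n. \<Sum>g\<in>?A z. complex_of_real (w g) * (1\<^sub>m ?d :: cmat) $$ (i,j))"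
        apply (intro sum.cong refl)
        subgoal for z g using Ks2[of g] msum_index[OF ij[simplified], of "\<lambda>k. dag (Ks g ! k) * (Ks g ! k)" "{..<length (Ks g)}"]
          by simp
        done
      also have "\<dots> = (1\<^sub>m ?d :: cmat) $$ (i,j)"
        using Sdef by (simp add: sum_distrib_right[symmetric])
      finally show "msum ?d (\<lambda>i. dag (K i) * K i) I $$ (i,j) = (1\<^sub>m ?d :: cmat) $$ (i,j)" .
    qed auto
    show "\<And>\<rho>. \<rho> \<in> carrier_mat ?d ?d \<Longrightarrow> Lbar n G p L a \<rho> = msum ?d (\<lambda>i. K i * \<rho> * dag (K i)) I"
    proof -
      fix \<rho> :: cmat assume r: "\<rho> \<in> carrier_mat ?d ?d"
      show "Lbar n G p L a \<rho> = msum ?d (\<lambda>i. K i * \<rho> * dag (K i)) I"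
      proof (rule eq_matI)
        fix i j assume ij: "i < dim_row (msum ?d (\<lambda>i. K i * \<rho> * dag (K i)) I)" "j < dim_col (msum ?d (\<lambda>i. K i * \<rho> * dag (K i)) I)"
        then have ij': "i < ?d" "j < ?d" by auto
        have "msum ?d (\<lambda>i. K i * \<rho> * dag (K i)) I $$ (i,j)
          = (\<Sum>z\<in>bitvecs n. \<Sum>g\<in>?A z. complex_of_real (w g) * (\<Sum>k<length (Ks g). ((Ks g ! k) * \<rho> * dag (Ks g ! k)) $$ (i,j)))"
          unfolding msum_index[OF ij'] sumI
          apply (intro sum.cong refl)
          apply (simp only: sum_distrib_left)
          apply (intro sum.cong refl)
          subgoal for z g k
            using kraus_scale(1)[OF Kk[of g k] r w0[of g]] ij' Kk[of g k] r
            by (simp add: K_def carrier_matD)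
          done
        also have "\<dots> = (\<Sum>z\<in>bitvecs n. \<Sum>g\<in>?A z. complex_of_real (w g) * L g \<rho> $$ (i,j))"
          apply (intro sum.cong refl)
          subgoal for z g using Ks3[of g \<rho>] r ij' by simp
          done
        also have "\<dots> = Lbar n G p L a \<rho> $$ (i,j)"
          unfolding Lbar_def using ij'
          apply (simp add: sum_distrib_left)
          apply (intro sum.cong refl)
          subgoal for z g
          proof -
            assume zg: "z \<in> bitvecs n" "g \<in> ?A z"
            have "L g \<rho> \<in> carrier_mat ?d ?d" using chan_carrier[of ?d "L g" \<rho>] Lch r zg by auto
            then show ?thesis using ij' by (simp add: w_def carrier_matD divide_inverse mult_ac)
          qed
          done
        finally show "Lbar n G p L a \<rho> $$ (i,j) = msum ?d (\<lambda>i. K i * \<rho> * dag (K i)) I $$ (i,j)" by simp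
      qed (auto simp: Lbar_def)
    qed
  qed
qed



definition reps :: "(bool \<times> bool) list \<Rightarrow> (bool \<times> bool) list \<Rightarrow> real" where
  "reps a b = (\<Prod>q<length a. if a ! q = (False,False) \<or> b ! q = (False,False) \<or> a ! q = b ! q then 1 else -1)"

lemma reps_abs: "\<bar>reps a b\<bar> = 1"
  unfolding reps_def abs_prod by (rule prod.neutral) simp

lemma pauli_conj_real:
  assumes "length a = length b"
  shows "pauli b * pauli a * pauli b = complex_of_real (reps a b) \<cdot>\<^sub>m pauli a"
proof -
  have "(\<Prod>q<length a. eps1 (a ! q) (b ! q)) = complex_of_real (reps a b)"
    by (simp add: reps_def eps1_def of_real_prod if_distrib cong: if_cong)
  then show ?thesis using pauli_conj[OF assms] by simp
qed

lemma pauli_chan_eig: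
  assumes ch: "pauli_channel n Lg" and a: "a \<in> pauli_idx n"
  shows "\<exists>r::real. \<bar>r\<bar> \<le> 1 \<and> Lg (pauli a) = complex_of_real r \<cdot>\<^sub>m pauli a \<and> pauli_eig Lg a = complex_of_real r"
proof -
  obtain q where q0: "\<forall>b\<in>pauli_idx n. q b \<ge> 0" and q1: "(\<Sum>b\<in>pauli_idx n. q b) = 1"
    and qL: "\<forall>\<rho>\<in>carrier_mat (dim n) (dim n).
          Lg \<rho> = msum (dim n) (\<lambda>b. complex_of_real (q b) \<cdot>\<^sub>m (pauli b * \<rho> * pauli b)) (pauli_idx n)"
    using ch unfolding pauli_channel_def by blast
  define r where "r = (\<Sum>b\<in>pauli_idx n. q b * reps a b)"
  have Pa: "pauli a \<in> carrier_mat (2^n) (2^n)" by (rule pauli_idx_carrier[OF a])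
  have la: "length a = n" using a by (simp add: pauli_idx_def)
  have L: "Lg (pauli a) = complex_of_real r \<cdot>\<^sub>m pauli a"
  proof (rule eq_matI)
    fix i j assume "i < dim_row (complex_of_real r \<cdot>\<^sub>m pauli a)" "j < dim_col (complex_of_real r \<cdot>\<^sub>m pauli a)"
    then have ij: "i < 2^n" "j < 2^n" using Pa by auto
    have "Lg (pauli a) $$ (i,j) = (\<Sum>b\<in>pauli_idx n. complex_of_real (q b) * (complex_of_real (reps a b) * pauli a $$ (i,j)))"
      using qL Pa ij
      apply (simp add: dim_def)
      apply (intro sum.cong refl)
      subgoal for b using a by (simp add: pauli_conj_real pauli_idx_def)
      done
    also have "\<dots> = (complex_of_real r \<cdot>\<^sub>m pauli a) $$ (i,j)"
      using ij Pa la by (simp add: r_def of_real_sum sum_distrib_left mult_ac)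
    finally show "Lg (pauli a) $$ (i,j) = (complex_of_real r \<cdot>\<^sub>m pauli a) $$ (i,j)" .
  next
    show "dim_row (Lg (pauli a)) = dim_row (complex_of_real r \<cdot>\<^sub>m pauli a)"
      using qL Pa la by (simp add: dim_def)
    show "dim_col (Lg (pauli a)) = dim_col (complex_of_real r \<cdot>\<^sub>m pauli a)"
      using qL Pa la by (simp add: dim_def)
  qed
  have "\<bar>r\<bar> \<le> (\<Sum>b\<in>pauli_idx n. \<bar>q b * reps a b\<bar>)" unfolding r_def by (rule sum_abs)
  also have "\<dots> = (\<Sum>b\<in>pauli_idx n. q b)" using q0 by (intro sum.cong refl) (simp add: abs_mult reps_abs)
  finally have r1: "\<bar>r\<bar> \<le> 1" using q1 by simp
  have eig: "pauli_eig Lg a = complex_of_real r"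
    unfolding pauli_eig_def
  proof (rule the_equality)
    show "Lg (pauli a) = complex_of_real r \<cdot>\<^sub>m pauli a" by (rule L)
    fix c assume "Lg (pauli a) = c \<cdot>\<^sub>m pauli a"
    then have "c \<cdot>\<^sub>m pauli a = complex_of_real r \<cdot>\<^sub>m pauli a" using L by simp
    then have "tr (pauli a * (c \<cdot>\<^sub>m pauli a)) = tr (pauli a * (complex_of_real r \<cdot>\<^sub>m pauli a))" by simp
    then have "c * 2^n = complex_of_real r * 2^n"
      using Pa a by (simp add: tr_mult_smult[OF Pa Pa] tr_pauli_mult pauli_idx_def)
    then show "c = complex_of_real r" by simp
  qed
  show ?thesis using r1 L eig by blast
qed

lemma Lbar_pauli:
  assumes G: "finite G" and p: "\<forall>g\<in>G. p g \<ge> 0" and a: "a \<in> pauli_idx n"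
    and s: "s_coef n G p a > 0" and pc: "\<forall>g\<in>G. pauli_channel n (L g)"
  shows "Lbar n G p L a (pauli a) = lbar n G p L a \<cdot>\<^sub>m pauli a
                \<and> lbar n G p L a \<in> \<real> \<and> -1 \<le> Re (lbar n G p L a) \<and> Re (lbar n G p L a) \<le> 1"
proof -
  let ?S = "s_coef n G p a"
  let ?A = "\<lambda>z. {g\<in>G. Xi n z g = pauli a}"
  have "\<forall>g\<in>G. \<exists>r::real. \<bar>r\<bar> \<le> 1 \<and> L g (pauli a) = complex_of_real r \<cdot>\<^sub>m pauli a \<and> pauli_eig (L g) a = complex_of_real r"
    using pc pauli_chan_eig[OF _ a] by blast
  then obtain r where r: "\<forall>g\<in>G. \<bar>r g\<bar> \<le> 1 \<and> L g (pauli a) = complex_of_real (r g) \<cdot>\<^sub>m pauli a \<and> pauli_eig (L g) a = complex_of_real (r g)"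
    by (metis bchoice)
  define R where "R = inverse ?S * (\<Sum>z\<in>bitvecs n. \<Sum>g\<in>?A z. p g * r g)"
  have Pa: "pauli a \<in> carrier_mat (2^n) (2^n)" by (rule pauli_idx_carrier[OF a])
  have la: "length a = n" using a by (simp add: pauli_idx_def)
  have lb: "lbar n G p L a = complex_of_real R"
    unfolding lbar_def R_def using r
    by (simp add: of_real_sum)
  have Lb: "Lbar n G p L a (pauli a) = lbar n G p L a \<cdot>\<^sub>m pauli a"
  proof (rule eq_matI)
    fix i j assume "i < dim_row (lbar n G p L a \<cdot>\<^sub>m pauli a)" "j < dim_col (lbar n G p L a \<cdot>\<^sub>m pauli a)"
    then have ij: "i < 2^n" "j < 2^n" using Pa by auto
    show "Lbar n G p L a (pauli a) $$ (i,j) = (lbar n G p L a \<cdot>\<^sub>m pauli a) $$ (i,j)"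
      unfolding Lbar_def lb R_def using ij Pa la
      apply (simp add: dim_def of_real_sum sum_distrib_left sum_distrib_right)
      apply (intro sum.cong refl)
      subgoal for z g using r la ij by (simp add: mult_ac)
      done
  qed (use la in \<open>auto simp: Lbar_def dim_def\<close>)
  have "\<bar>\<Sum>z\<in>bitvecs n. \<Sum>g\<in>?A z. p g * r g\<bar> \<le> (\<Sum>z\<in>bitvecs n. \<Sum>g\<in>?A z. p g)"
  proof -
    have "\<bar>\<Sum>z\<in>bitvecs n. \<Sum>g\<in>?A z. p g * r g\<bar> \<le> (\<Sum>z\<in>bitvecs n. \<bar>\<Sum>g\<in>?A z. p g * r g\<bar>)" by (rule sum_abs)
    also have "\<dots> \<le> (\<Sum>z\<in>bitvecs n. \<Sum>g\<in>?A z. \<bar>p g * r g\<bar>)" by (intro sum_mono sum_abs)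
    also have "\<dots> \<le> (\<Sum>z\<in>bitvecs n. \<Sum>g\<in>?A z. p g)"
    proof (intro sum_mono)
      fix z g assume "g \<in> ?A z"
      then have "p g \<ge> 0" "\<bar>r g\<bar> \<le> 1" using p r by auto
      then show "\<bar>p g * r g\<bar> \<le> p g" by (simp add: abs_mult mult_left_le)
    qed
    finally show ?thesis .
  qed
  then have X: "\<bar>\<Sum>z\<in>bitvecs n. \<Sum>g\<in>?A z. p g * r g\<bar> \<le> ?S" by (simp add: s_coef_def)
  have "\<bar>R\<bar> = inverse ?S * \<bar>\<Sum>z\<in>bitvecs n. \<Sum>g\<in>?A z. p g * r g\<bar>"
    unfolding R_def using s by (simp add: abs_mult)
  also have "\<dots> \<le> inverse ?S * ?S" using X s by (intro mult_left_mono) auto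
  also have "\<dots> = 1" using s by simp
  finally have "\<bar>R\<bar> \<le> 1" .
  then show ?thesis using Lb lb by (simp add: abs_le_iff)
qed


theorem lemma1:
  fixes n :: nat and G :: "complex mat set" and p :: "complex mat \<Rightarrow> real"
    and L :: "complex mat \<Rightarrow> complex mat \<Rightarrow> complex mat"
  assumes G_fin: "finite G" and G_cl: "G \<subseteq> Clifford n"
    and p_nonneg: "\<forall>g\<in>G. p g \<ge> 0" and p_sum: "(\<Sum>g\<in>G. p g) = 1"
    and S_inv: "bij_betw (frame_op n G p) (carrier_mat (dim n) (dim n)) (carrier_mat (dim n) (dim n))"
    and L_chan: "\<forall>g\<in>G. quantum_channel (dim n) (L g)"
  shows "(\<forall>C\<in>carrier_mat (dim n) (dim n).
            frame_op n G p C =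
              msum (dim n) (\<lambda>a. complex_of_real (s_coef n G p a / real (dim n)) \<cdot>\<^sub>m
                               ketbra (pauli a) (pauli a) C) (pauli_idx n))
       \<and> (\<forall>a\<in>pauli_idx n. 0 < s_coef n G p a \<and> s_coef n G p a \<le> 1)
       \<and> (\<forall>a\<in>pauli_idx n. quantum_channel (dim n) (Lbar n G p L a))
       \<and> (\<forall>C\<in>carrier_mat (dim n) (dim n).
            noisy_frame_op n G p L C =
              msum (dim n) (\<lambda>a. complex_of_real (s_coef n G p a / real (dim n)) \<cdot>\<^sub>m
                               ketbra (pauli a) (pauli a) (Lbar n G p L a C)) (pauli_idx n))
       \<and> ((\<forall>g\<in>G. pauli_channel n (L g)) \<longrightarrow>
            (\<forall>a\<in>pauli_idx n. Lbar n G p L a (pauli a) = lbar n G p L a \<cdot>\<^sub>m pauli a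
                \<and> lbar n G p L a \<in> \<real> \<and> -1 \<le> Re (lbar n G p L a) \<and> Re (lbar n G p L a) \<le> 1))"
proof -
  have G': "finite G" "G \<subseteq> Clifford n" using G_fin G_cl by auto
  have spos: "\<And>a. a \<in> pauli_idx n \<Longrightarrow> s_coef n G p a > 0"
    using s_coef_pos[OF G' p_nonneg S_inv] by blast
  have P1: "\<forall>C\<in>carrier_mat (dim n) (dim n).
            frame_op n G p C =
              msum (dim n) (\<lambda>a. complex_of_real (s_coef n G p a / real (dim n)) \<cdot>\<^sub>m
                               ketbra (pauli a) (pauli a) C) (pauli_idx n)"
    using frame_decomp[OF G'] by blast
  have P2: "\<forall>a\<in>pauli_idx n. 0 < s_coef n G p a \<and> s_coef n G p a \<le> 1"
    using spos s_coef_le1[OF G' p_nonneg p_sum] by blast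
  have P3: "\<forall>a\<in>pauli_idx n. quantum_channel (dim n) (Lbar n G p L a)"
    using Lbar_channel[OF G_fin p_nonneg spos L_chan] by blast
  have P4: "\<forall>C\<in>carrier_mat (dim n) (dim n).
            noisy_frame_op n G p L C =
              msum (dim n) (\<lambda>a. complex_of_real (s_coef n G p a / real (dim n)) \<cdot>\<^sub>m
                               ketbra (pauli a) (pauli a) (Lbar n G p L a C)) (pauli_idx n)"
  proof
    fix C :: cmat assume C: "C \<in> carrier_mat (dim n) (dim n)"
    have Lc: "\<And>g. g \<in> G \<Longrightarrow> L g C \<in> carrier_mat (2^n) (2^n)"
      using chan_carrier[of "dim n" _ C] L_chan C by (auto simp: dim_def)
    show "noisy_frame_op n G p L C =
              msum (dim n) (\<lambda>a. complex_of_real (s_coef n G p a / real (dim n)) \<cdot>\<^sub>m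
                               ketbra (pauli a) (pauli a) (Lbar n G p L a C)) (pauli_idx n)"
    proof (rule noisy_decomp[OF G'])
      show "\<And>a. a \<in> pauli_idx n \<Longrightarrow> s_coef n G p a \<noteq> 0" using spos by force
      show "\<And>g. g \<in> G \<Longrightarrow> L g C \<in> carrier_mat (2^n) (2^n)" by (rule Lc)
    qed
  qed
  have P5: "(\<forall>g\<in>G. pauli_channel n (L g)) \<longrightarrow>
            (\<forall>a\<in>pauli_idx n. Lbar n G p L a (pauli a) = lbar n G p L a \<cdot>\<^sub>m pauli a
                \<and> lbar n G p L a \<in> \<real> \<and> -1 \<le> Re (lbar n G p L a) \<and> Re (lbar n G p L a) \<le> 1)"
    using Lbar_pauli[OF G_fin p_nonneg _ spos] by blast
  show ?thesis using P1 P2 P3 P4 P5 by blast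
qed

end
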